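(* Fix $\alpha>1$, a target model $\theta_0^*\in\Theta$ and a class $\hat\Theta_0^{\mathrm{u}}\subseteq\Theta$; let $\epsilon_0=\min_{\theta_0\in\hat\Theta_0^{\mathrm{u}}}\max_{\pi\in\Pi}\mathtt{D}_{\mathtt{R},\alpha}(\mathbb{P}^\pi_{\theta_0^*},\mathbb{P}^\pi_{\theta_0})$, $\eta\le\frac{1}{KH}$, and run OMLE on $\hat\Theta_0^{\mathrm{u}}$ for $K$ iterations with margin \[\beta_0=\log\mathcal{N}_\eta(\hat\Theta_0^{\mathrm{u}})+\log\frac{4eK}{\delta}+\epsilon_0KH+\frac{\mathbf{1}_{\{\epsilon_0\ne0\}}}{\alpha-1}\log\frac{4K}{\delta}.\] Then with probability at least $1-\delta$, for every $k\in[K]$ and every $\theta_0\in\boldsymbol{\mathcal{B}}_k$, \[\sum_{t<k}\sum_{h}\mathtt{D}_{\mathtt{H}}^2\big(\mathbb{P}^{\nu_h^{\pi^t}}_{\theta_0},\mathbb{P}^{\nu_h^{\pi^t}}_{\theta_0^*}\big)\le2\beta_0.\]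
   Context: Setting: finite $\mathcal{O},\mathcal{A}$, horizon $H$; trajectories $\tau_H=(o_1,a_1,\ldots,o_H,a_H)$; policies $\pi$ with $a_h\sim\pi_h(\cdot\mid\tau_{h-1},o_h)$, $\Pi$ the set of all policies, $\pi(\tau_H)=\prod_{t}\pi(a_t\mid o_t,\tau_{t-1})$; $\mathbb{P}^\pi_\theta$ is the trajectory law of model $\theta$ under $\pi$. $\Theta$ is the set of rank-$r$, $\gamma$-well-conditioned predictive state representations (PSRs); the target task has core action sequence sets $\mathcal{Q}_h^A\subset\mathcal{A}^{H-h}$. $\mathtt{D}_{\mathtt{TV}}(\mathbb{P},\mathbb{Q})=\sum_x|\mathbb{P}(x)-\mathbb{Q}(x)|$, $\mathtt{D}_{\mathtt{H}}^2(\mathbb{P},\mathbb{Q})=1-\sum_x\sqrt{\mathbb{P}(x)\mathbb{Q}(x)}$, $\mathtt{D}_{\mathtt{R},\alpha}(\mathbb{P},\mathbb{Q})=\frac{1}{\alpha-1}\log\mathbb{E}_{\mathbb{P}}[(\mathrm{d}\mathbb{P}/\mathrm{d}\mathbb{Q})^{\alpha-1}]$. Bracketing number: a bracket $[l,g]$ is the set of class members $f$ with $l\le f\le g$; it is an $\eta$-bracket if $\max_{\pi\in\Pi}\sum_{\tau_H}|l-g|(\tau_H)\pi(\tau_H)<\eta$; $\mathcal{N}_\eta(\hat\Theta)$ is the minimal number of $\eta$-brackets covering $\{\mathbb{P}_\theta:\theta\in\hat\Theta\}$. Algorithm OMLE (inputs $\hat\Theta$, $\beta_0$, $K$): $\boldsymbol{\mathcal{B}}_1=\hat\Theta$;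 for $k=1,\ldots,K$: $\pi^k\in\arg\max_{\pi}\max_{\theta,\theta'\in\boldsymbol{\mathcal{B}}_k}\mathtt{D}_{\mathtt{TV}}(\mathbb{P}^\pi_\theta,\mathbb{P}^\pi_{\theta'})$; for each $h\in[H]$ draw $\tau_H^{k,h}\sim\mathbb{P}^{\nu_h^{\pi^k}}_{\theta_0^*}$, where $\nu_h^{\pi^k}$ follows $\pi^k$ for $h-1$ steps, takes a uniform action at step $h$, then plays a uniformly random core action sequence from $\mathcal{Q}_h^A$; then $\boldsymbol{\mathcal{B}}_{k+1}=\{\theta\in\hat\Theta:\sum_{t<k}\sum_h\log\mathbb{P}^{\nu_h^{\pi^t}}_\theta(\tau_H^{t,h})\ge\max_{\theta'\in\hat\Theta}\sum_{t<k}\sum_h\log\mathbb{P}^{\nu_h^{\pi^t}}_{\theta'}(\tau_H^{t,h})-\beta_0\}\cap\boldsymbol{\mathcal{B}}_k$. *)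

theory Defs
  imports "HOL-Probability.Probability"
begin

(* histories / trajectories tau_h = (o_1,a_1,...,o_h,a_h) as lists of pairs *)
type_synonym ('o,'a) hist = "('o \<times> 'a) list"
(* a model: law of the next observation given the history (P_theta(o_h | tau_{h-1})) *)
type_synonym ('o,'a) model = "('o,'a) hist \<Rightarrow> 'o pmf"
(* a (general, randomized, history dependent) policy: pi_h(. | tau_{h-1}, o_h) *)
type_synonym ('o,'a) policy = "('o,'a) hist \<Rightarrow> 'o \<Rightarrow> 'a pmf"
(* data of one OMLE iteration: h \<mapsto> tau_H^{k,h} *)
type_synonym ('o,'a) data = "nat \<Rightarrow> ('o,'a) hist"

fun traj :: "('o,'a) model \<Rightarrow> ('o,'a) policy \<Rightarrow> nat \<Rightarrow> ('o,'a) hist pmf" where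
  "traj \<theta> \<pi> 0 = return_pmf []"
| "traj \<theta> \<pi> (Suc n) =
     traj \<theta> \<pi> n \<bind> (\<lambda>\<tau>. \<theta> \<tau> \<bind> (\<lambda>ob. \<pi> \<tau> ob \<bind> (\<lambda>a. return_pmf (\<tau> @ [(ob, a)]))))"

definition model_prob :: "('o,'a) model \<Rightarrow> ('o,'a) hist \<Rightarrow> real" where
  "model_prob \<theta> \<tau> = (\<Prod>t<length \<tau>. pmf (\<theta> (take t \<tau>)) (fst (\<tau> ! t)))"

definition pol_prob :: "('o,'a) policy \<Rightarrow> ('o,'a) hist \<Rightarrow> real" where
  "pol_prob \<pi> \<tau> = (\<Prod>t<length \<tau>. pmf (\<pi> (take t \<tau>) (fst (\<tau> ! t))) (snd (\<tau> ! t)))"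

definition D_TV :: "'b pmf \<Rightarrow> 'b pmf \<Rightarrow> real" where
  "D_TV P Q = (\<Sum>\<^sub>\<infinity>x. \<bar>pmf P x - pmf Q x\<bar>)"

definition D_H2 :: "'b pmf \<Rightarrow> 'b pmf \<Rightarrow> real" where
  "D_H2 P Q = 1 - (\<Sum>\<^sub>\<infinity>x. sqrt (pmf P x * pmf Q x))"

definition D_R :: "real \<Rightarrow> 'b pmf \<Rightarrow> 'b pmf \<Rightarrow> ereal" where
  "D_R \<alpha> P Q =
     (if \<exists>x\<in>set_pmf P. pmf Q x = 0 then \<infinity>
      else ereal (ln (\<Sum>x\<in>set_pmf P. pmf P x powr \<alpha> * pmf Q x powr (1 - \<alpha>)) / (\<alpha> - 1)))"

definition is_bracket :: "nat \<Rightarrow> real \<Rightarrow> (('o::finite,'a::finite) hist \<Rightarrow> real) \<Rightarrow> (('o,'a) hist \<Rightarrow> real) \<Rightarrow> bool" where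
  "is_bracket H \<eta> l g \<longleftrightarrow>
     (SUP \<pi>::('o,'a) policy. \<Sum>\<tau>\<in>{\<tau>. length \<tau> = H}. \<bar>l \<tau> - g \<tau>\<bar> * pol_prob \<pi> \<tau>) < \<eta>"

definition bracket_num :: "nat \<Rightarrow> real \<Rightarrow> ('o::finite,'a::finite) model set \<Rightarrow> enat" where
  "bracket_num H \<eta> \<Theta>h = (INF n \<in> {n. \<exists>l g. (\<forall>i<n. is_bracket H \<eta> (l i) (g i)) \<and>
        (\<forall>\<theta>\<in>\<Theta>h. \<exists>i<n. \<forall>\<tau>. length \<tau> = H \<longrightarrow>
            l i \<tau> \<le> model_prob \<theta> \<tau> \<and> model_prob \<theta> \<tau> \<le> g i \<tau>)}. enat n)"

definition ln_enat :: "enat \<Rightarrow> ereal" where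
  "ln_enat n = (case n of enat m \<Rightarrow> ereal (ln (real m)) | \<infinity> \<Rightarrow> \<infinity>)"

definition eln :: "real \<Rightarrow> ereal" where
  "eln x = (if x > 0 then ereal (ln x) else -\<infinity>)"

(* exploration policy nu_h^pi: follow pi for steps 1..h-1, uniform action at step h, then
   a uniformly random core action sequence from Q h (played action by action, i.e. the
   conditional law of the next entry of a uniform element of Q h given the entries played so far) *)
definition nu :: "(nat \<Rightarrow> 'a::finite list set) \<Rightarrow> nat \<Rightarrow> ('o,'a) policy \<Rightarrow> ('o,'a) policy" where
  "nu Q h \<pi> = (\<lambda>\<tau> ob.
     if Suc (length \<tau>) < h then \<pi> \<tau> ob
     else if Suc (length \<tau>) = h then pmf_of_set UNIV
     else (let j = length \<tau> - h; S = {q \<in> Q h. take j q = map snd (drop h \<tau>)} in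
           if S = {} then pmf_of_set UNIV else map_pmf (\<lambda>q. q ! j) (pmf_of_set S)))"

(* OMLE log-likelihood of data D (iterations t = 0..length D - 1, policy pi^t = sel (take t D)) *)
definition loglik :: "nat \<Rightarrow> (nat \<Rightarrow> 'a::finite list set) \<Rightarrow> (('o,'a) data list \<Rightarrow> ('o,'a) policy)
     \<Rightarrow> ('o,'a) data list \<Rightarrow> ('o,'a) model \<Rightarrow> ereal" where
  "loglik H Q sel D \<theta> =
     (\<Sum>t<length D. \<Sum>h\<in>{1..H}. eln (pmf (traj \<theta> (nu Q h (sel (take t D))) H) ((D ! t) h)))"

(* Bset ... D j = confidence set after using the first j iterations' data *)
fun Bset :: "('o,'a) model set \<Rightarrow> ereal \<Rightarrow> nat \<Rightarrow> (nat \<Rightarrow> 'a::finite list set)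
     \<Rightarrow> (('o,'a) data list \<Rightarrow> ('o,'a) policy) \<Rightarrow> ('o,'a) data list \<Rightarrow> nat \<Rightarrow> ('o,'a) model set" where
  "Bset \<Theta>h \<beta> H Q sel D 0 = \<Theta>h"
| "Bset \<Theta>h \<beta> H Q sel D (Suc j) =
     {\<theta> \<in> \<Theta>h. loglik H Q sel (take (Suc j) D) \<theta> \<ge>
        (SUP \<theta>'\<in>\<Theta>h. loglik H Q sel (take (Suc j) D) \<theta>') - \<beta>} \<inter> Bset \<Theta>h \<beta> H Q sel D j"

(* B_{k+1} when D holds the data of iterations 1..k *)
definition OMLE_B :: "('o,'a) model set \<Rightarrow> ereal \<Rightarrow> nat \<Rightarrow> (nat \<Rightarrow> 'a::finite list set)
     \<Rightarrow> (('o,'a) data list \<Rightarrow> ('o,'a) policy) \<Rightarrow> ('o,'a) data list \<Rightarrow> ('o,'a) model set" where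
  "OMLE_B \<Theta>h \<beta> H Q sel D = Bset \<Theta>h \<beta> H Q sel D (length D)"

definition TV_diam :: "nat \<Rightarrow> ('o,'a) model set \<Rightarrow> ('o,'a) policy \<Rightarrow> ereal" where
  "TV_diam H B \<pi> = (SUP \<theta>\<in>B. SUP \<theta>'\<in>B. ereal (D_TV (traj \<theta> \<pi> H) (traj \<theta>' \<pi> H)))"

fun data_pmf :: "('o,'a) model \<Rightarrow> (nat \<Rightarrow> 'a::finite list set) \<Rightarrow> nat
     \<Rightarrow> (('o,'a) data list \<Rightarrow> ('o,'a) policy) \<Rightarrow> nat \<Rightarrow> ('o,'a) data list pmf" where
  "data_pmf \<theta>s Q H sel 0 = return_pmf []"
| "data_pmf \<theta>s Q H sel (Suc k) =
     data_pmf \<theta>s Q H sel k \<bind> (\<lambda>D. map_pmf (\<lambda>X. D @ [X])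
        (Pi_pmf {1..H} [] (\<lambda>h. traj \<theta>s (nu Q h (sel D)) H)))"

definition eps0 :: "real \<Rightarrow> nat \<Rightarrow> ('o,'a) model \<Rightarrow> ('o,'a) model set \<Rightarrow> ereal" where
  "eps0 \<alpha> H \<theta>s \<Theta>h = (INF \<theta>0\<in>\<Theta>h. SUP \<pi>::('o,'a) policy. D_R \<alpha> (traj \<theta>s \<pi> H) (traj \<theta>0 \<pi> H))"

definition beta0 :: "real \<Rightarrow> real \<Rightarrow> real \<Rightarrow> nat \<Rightarrow> nat \<Rightarrow> ('o::finite,'a::finite) model
     \<Rightarrow> ('o,'a) model set \<Rightarrow> ereal" where
  "beta0 \<alpha> \<delta> \<eta> K H \<theta>s \<Theta>h =
     ln_enat (bracket_num H \<eta> \<Theta>h) + ereal (ln (4 * exp 1 * real K / \<delta>))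
     + eps0 \<alpha> H \<theta>s \<Theta>h * ereal (real K * real H)
     + (if eps0 \<alpha> H \<theta>s \<Theta>h \<noteq> 0 then ereal (ln (4 * real K / \<delta>) / (\<alpha> - 1)) else 0)"

end

theory Submission
  imports Defs
begin
lemma traj_set: "set_pmf (traj \<theta> \<pi> n) \<subseteq> {\<tau>. length \<tau> = n}"
  by (induction n) (auto simp: set_bind_pmf)

lemma model_prob_snoc: "model_prob \<theta> (\<tau> @ [(ob, a)]) = model_prob \<theta> \<tau> * pmf (\<theta> \<tau>) ob"
proof -
  have "model_prob \<theta> (\<tau> @ [(ob, a)]) = (\<Prod>t<Suc (length \<tau>). pmf (\<theta> (take t (\<tau> @ [(ob, a)]))) (fst ((\<tau> @ [(ob, a)]) ! t)))"
    by (simp add: model_prob_def)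
  also have "\<dots> = (\<Prod>t<length \<tau>. pmf (\<theta> (take t (\<tau> @ [(ob, a)]))) (fst ((\<tau> @ [(ob, a)]) ! t))) * pmf (\<theta> \<tau>) ob"
    by (simp add: prod.lessThan_Suc)
  also have "(\<Prod>t<length \<tau>. pmf (\<theta> (take t (\<tau> @ [(ob, a)]))) (fst ((\<tau> @ [(ob, a)]) ! t))) = model_prob \<theta> \<tau>"
    unfolding model_prob_def by (intro prod.cong) (auto simp: nth_append)
  finally show ?thesis .
qed

lemma pol_prob_snoc: "pol_prob \<pi> (\<tau> @ [(ob, a)]) = pol_prob \<pi> \<tau> * pmf (\<pi> \<tau> ob) a"
proof -
  have "pol_prob \<pi> (\<tau> @ [(ob, a)]) = (\<Prod>t<Suc (length \<tau>). pmf (\<pi> (take t (\<tau> @ [(ob, a)])) (fst ((\<tau> @ [(ob, a)]) ! t))) (snd ((\<tau> @ [(ob, a)]) ! t)))"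
    by (simp add: pol_prob_def)
  also have "\<dots> = (\<Prod>t<length \<tau>. pmf (\<pi> (take t (\<tau> @ [(ob, a)])) (fst ((\<tau> @ [(ob, a)]) ! t))) (snd ((\<tau> @ [(ob, a)]) ! t))) * pmf (\<pi> \<tau> ob) a"
    by (simp add: prod.lessThan_Suc)
  also have "(\<Prod>t<length \<tau>. pmf (\<pi> (take t (\<tau> @ [(ob, a)])) (fst ((\<tau> @ [(ob, a)]) ! t))) (snd ((\<tau> @ [(ob, a)]) ! t))) = pol_prob \<pi> \<tau>"
    unfolding pol_prob_def by (intro prod.cong) (auto simp: nth_append)
  finally show ?thesis .
qed

lemma pmf_bind_single:
  assumes "\<And>x. x \<in> set_pmf M \<Longrightarrow> pmf (f x) y \<noteq> 0 \<Longrightarrow> x = x0"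
  shows "pmf (M \<bind> f) y = pmf M x0 * pmf (f x0) y"
  by (subst pmf_bind, subst integral_measure_pmf_real[of "{x0}"]) (use assms in auto)

lemma traj_pmf: "length \<tau> = n \<Longrightarrow> pmf (traj \<theta> \<pi> n) \<tau> = model_prob \<theta> \<tau> * pol_prob \<pi> \<tau>"
proof (induction n arbitrary: \<tau>)
  case 0 thus ?case by (simp add: model_prob_def pol_prob_def)
next
  case (Suc n)
  then obtain \<tau>' ob a where t: "\<tau> = \<tau>' @ [(ob, a)]" and l: "length \<tau>' = n"
    by (metis length_Suc_conv_rev prod.collapse)
  have "pmf (traj \<theta> \<pi> (Suc n)) \<tau> = pmf (traj \<theta> \<pi> n) \<tau>' *
      pmf (\<theta> \<tau>' \<bind> (\<lambda>ob'. \<pi> \<tau>' ob' \<bind> (\<lambda>a'. return_pmf (\<tau>' @ [(ob', a')])))) \<tau>"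
    unfolding traj.simps
  proof (rule pmf_bind_single)
    fix x assume x: "x \<in> set_pmf (traj \<theta> \<pi> n)"
      "pmf (\<theta> x \<bind> (\<lambda>ob. \<pi> x ob \<bind> (\<lambda>a. return_pmf (x @ [(ob, a)])))) \<tau> \<noteq> 0"
    then have "\<tau> \<in> set_pmf (\<theta> x \<bind> (\<lambda>ob. \<pi> x ob \<bind> (\<lambda>a. return_pmf (x @ [(ob, a)]))))"
      by (simp add: set_pmf_eq)
    then show "x = \<tau>'" using t by (auto simp: set_bind_pmf)
  qed
  also have "pmf (\<theta> \<tau>' \<bind> (\<lambda>ob'. \<pi> \<tau>' ob' \<bind> (\<lambda>a'. return_pmf (\<tau>' @ [(ob', a')])))) \<tau>
      = pmf (\<theta> \<tau>') ob * pmf (\<pi> \<tau>' ob \<bind> (\<lambda>a'. return_pmf (\<tau>' @ [(ob, a')]))) \<tau>"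
  proof (rule pmf_bind_single)
    fix x assume "x \<in> set_pmf (\<theta> \<tau>')" "pmf (\<pi> \<tau>' x \<bind> (\<lambda>a'. return_pmf (\<tau>' @ [(x, a')]))) \<tau> \<noteq> 0"
    then have "\<tau> \<in> set_pmf (\<pi> \<tau>' x \<bind> (\<lambda>a'. return_pmf (\<tau>' @ [(x, a')])))" by (simp add: set_pmf_eq)
    then show "x = ob" using t by auto
  qed
  also have "pmf (\<pi> \<tau>' ob \<bind> (\<lambda>a'. return_pmf (\<tau>' @ [(ob, a')]))) \<tau> = pmf (\<pi> \<tau>' ob) a"
  proof (subst pmf_bind_single[of _ _ _ a])
    fix x assume "x \<in> set_pmf (\<pi> \<tau>' ob)" "pmf (return_pmf (\<tau>' @ [(ob, x)])) \<tau> \<noteq> 0"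
    then show "x = a" using t by (auto simp: pmf_return indicator_def split: if_splits)
  qed (simp add: t)
  finally show ?case using Suc.IH[OF l] by (simp add: t model_prob_snoc pol_prob_snoc)
qed

lemma data_set:
  "D \<in> set_pmf (data_pmf \<theta>s Q H sel n) \<Longrightarrow> length D = n \<and>
     (\<forall>t<n. \<forall>h\<in>{1..H}. (D ! t) h \<in> set_pmf (traj \<theta>s (nu Q h (sel (take t D))) H))"
proof (induction n arbitrary: D)
  case 0 thus ?case by simp
next
  case (Suc n)
  from Suc.prems obtain D0 X where D: "D = D0 @ [X]" and D0: "D0 \<in> set_pmf (data_pmf \<theta>s Q H sel n)"
    and X: "X \<in> set_pmf (Pi_pmf {1..H} [] (\<lambda>h. traj \<theta>s (nu Q h (sel D0)) H))"
    by (auto simp: set_bind_pmf)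
  note IH = Suc.IH[OF D0]
  have X': "\<forall>h\<in>{1..H}. X h \<in> set_pmf (traj \<theta>s (nu Q h (sel D0)) H)"
    using X by (auto simp: set_Pi_pmf PiE_dflt_def)
  show ?case
  proof (intro conjI allI impI ballI)
    show "length D = Suc n" using IH D by simp
  next
    fix t h assume t: "t < Suc n" and h: "h \<in> {1..H}"
    show "(D ! t) h \<in> set_pmf (traj \<theta>s (nu Q h (sel (take t D))) H)"
    proof (cases "t < n")
      case True
      then show ?thesis using IH h D by (auto simp: nth_append)
    next
      case False
      then have "t = n" using t by simp
      then show ?thesis using IH h D X' by (auto simp: nth_append)
    qed
  qed
qed

lemma data_take:
  "j \<le> n \<Longrightarrow> map_pmf (take j) (data_pmf \<theta>s Q H sel n) = data_pmf \<theta>s Q H sel j"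
proof (induction n)
  case 0 thus ?case by simp
next
  case (Suc n)
  show ?case
  proof (cases "j = Suc n")
    case True
    have "map_pmf (take j) (data_pmf \<theta>s Q H sel (Suc n)) = data_pmf \<theta>s Q H sel (Suc n)"
      by (rule map_pmf_idI) (use True in \<open>auto dest: data_set\<close>)
    then show ?thesis using True by simp
  next
    case False
    then have j: "j \<le> n" using Suc.prems by simp
    have "map_pmf (take j) (data_pmf \<theta>s Q H sel (Suc n)) =
      data_pmf \<theta>s Q H sel n \<bind> (\<lambda>D. map_pmf (take j) (map_pmf (\<lambda>X. D @ [X])
        (Pi_pmf {1..H} [] (\<lambda>h. traj \<theta>s (nu Q h (sel D)) H))))"
      by (simp add: map_bind_pmf)
    also have "\<dots> = data_pmf \<theta>s Q H sel n \<bind> (\<lambda>D. return_pmf (take j D))"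
    proof (intro bind_pmf_cong refl)
      fix D assume "D \<in> set_pmf (data_pmf \<theta>s Q H sel n)"
      then have "length D = n" by (auto dest: data_set)
      then show "map_pmf (take j) (map_pmf (\<lambda>X. D @ [X])
        (Pi_pmf {1..H} [] (\<lambda>h. traj \<theta>s (nu Q h (sel D)) H))) = return_pmf (take j D)"
        using j by (simp add: map_pmf_comp)
    qed
    also have "\<dots> = map_pmf (take j) (data_pmf \<theta>s Q H sel n)"
      by (simp add: map_pmf_def)
    finally show ?thesis using Suc.IH[OF j] by simp
  qed
qed

lemma data_int:
  fixes F :: "nat \<Rightarrow> ('o,'a::finite) data list \<Rightarrow> nat \<Rightarrow> ('o,'a) hist \<Rightarrow> ennreal"
  assumes "\<And>t D' h. t < n \<Longrightarrow> h \<in> {1..H} \<Longrightarrow> (\<integral>\<^sup>+x. F t D' h x \<partial>(traj \<theta>s (nu Q h (sel D')) H)) \<le> 1"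
  shows "(\<integral>\<^sup>+D. (\<Prod>t<n. \<Prod>h\<in>{1..H}. F t (take t D) h ((D!t) h)) \<partial>(data_pmf \<theta>s Q H sel n)) \<le> 1"
  using assms
proof (induction n)
  case 0 thus ?case by (simp add: measure_pmf.emeasure_space_1)
next
  case (Suc n)
  let ?G = "\<lambda>n D. (\<Prod>t<n. \<Prod>h\<in>{1..H}. F t (take t D) h ((D!t) h))"
  have "(\<integral>\<^sup>+D. ?G (Suc n) D \<partial>(data_pmf \<theta>s Q H sel (Suc n))) =
     (\<integral>\<^sup>+D. (\<integral>\<^sup>+X. ?G (Suc n) (D @ [X]) \<partial>(Pi_pmf {1..H} [] (\<lambda>h. traj \<theta>s (nu Q h (sel D)) H)))
        \<partial>(data_pmf \<theta>s Q H sel n))"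
    by simp
  also have "\<dots> \<le> (\<integral>\<^sup>+D. ?G n D \<partial>(data_pmf \<theta>s Q H sel n))"
  proof (intro nn_integral_mono_AE, unfold AE_measure_pmf_iff, intro ballI)
    fix D assume "D \<in> set_pmf (data_pmf \<theta>s Q H sel n)"
    then have lD: "length D = n" by (auto dest: data_set)
    have eq: "?G (Suc n) (D @ [X]) = ?G n D * (\<Prod>h\<in>{1..H}. F n D h (X h))" for X
    proof -
      have "?G (Suc n) (D @ [X]) = (\<Prod>t<n. \<Prod>h\<in>{1..H}. F t (take t (D @ [X])) h (((D @ [X])!t) h)) *
          (\<Prod>h\<in>{1..H}. F n (take n (D @ [X])) h (((D @ [X])!n) h))"
        by (simp add: prod.lessThan_Suc)
      also have "(\<Prod>t<n. \<Prod>h\<in>{1..H}. F t (take t (D @ [X])) h (((D @ [X])!t) h)) = ?G n D"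
        using lD by (intro prod.cong refl) (auto simp: nth_append)
      moreover have "(D @ [X]) ! n = X" "take n (D @ [X]) = D" using lD by auto
      ultimately show ?thesis by simp
    qed
    have e1: "(\<integral>\<^sup>+X. ?G (Suc n) (D @ [X]) \<partial>(Pi_pmf {1..H} [] (\<lambda>h. traj \<theta>s (nu Q h (sel D)) H)))
       = ?G n D * (\<integral>\<^sup>+X. (\<Prod>h\<in>{1..H}. F n D h (X h)) \<partial>(Pi_pmf {1..H} [] (\<lambda>h. traj \<theta>s (nu Q h (sel D)) H)))"
      unfolding eq by (simp add: nn_integral_cmult)
    have "(\<integral>\<^sup>+X. (\<Prod>h\<in>{1..H}. F n D h (X h)) \<partial>(Pi_pmf {1..H} [] (\<lambda>h. traj \<theta>s (nu Q h (sel D)) H)))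
       = (\<Prod>h\<in>{1..H}. (\<integral>\<^sup>+x. F n D h x \<partial>(traj \<theta>s (nu Q h (sel D)) H)))"
      by (rule nn_integral_prod_Pi_pmf) simp
    also have "\<dots> \<le> 1"
    proof (rule prod_le_1)
      fix h assume h: "h \<in> {1..H}"
      show "0 \<le> (\<integral>\<^sup>+x. F n D h x \<partial>(traj \<theta>s (nu Q h (sel D)) H)) \<and> (\<integral>\<^sup>+x. F n D h x \<partial>(traj \<theta>s (nu Q h (sel D)) H)) \<le> 1"
        using Suc.prems[of n h D] h by simp
    qed
    finally have le: "(\<integral>\<^sup>+X. (\<Prod>h\<in>{1..H}. F n D h (X h)) \<partial>(Pi_pmf {1..H} [] (\<lambda>h. traj \<theta>s (nu Q h (sel D)) H))) \<le> 1" .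
    have "?G n D * (\<integral>\<^sup>+X. (\<Prod>h\<in>{1..H}. F n D h (X h)) \<partial>(Pi_pmf {1..H} [] (\<lambda>h. traj \<theta>s (nu Q h (sel D)) H))) \<le> ?G n D * 1"
      by (rule mult_left_mono[OF le]) simp
    then show "(\<integral>\<^sup>+X. ?G (Suc n) (D @ [X]) \<partial>(Pi_pmf {1..H} [] (\<lambda>h. traj \<theta>s (nu Q h (sel D)) H))) \<le> ?G n D"
      unfolding e1 by simp

  qed
  also have "\<dots> \<le> 1" using Suc by simp
  finally show ?case .
qed

lemma hell_core:
  fixes A B U :: "'x \<Rightarrow> real"
  assumes S: "finite S" and A: "\<And>x. x \<in> S \<Longrightarrow> 0 \<le> A x" and B: "\<And>x. x \<in> S \<Longrightarrow> 0 \<le> B x"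
    and U: "\<And>x. x \<in> S \<Longrightarrow> A x \<le> U x"
    and A1: "(\<Sum>x\<in>S. (A x)\<^sup>2) = 1" and B1: "(\<Sum>x\<in>S. (B x)\<^sup>2) = 1"
    and e: "(\<Sum>x\<in>S. (U x)\<^sup>2 - (A x)\<^sup>2) \<le> e"
  shows "1 - (\<Sum>x\<in>S. A x * B x) \<le> 4/3 * (1 - (\<Sum>x\<in>S. U x * B x)) + 8/3 * e"
proof -
  have pw: "(A x - B x)\<^sup>2 \<le> 4/3 * (U x - B x)\<^sup>2 + 4 * ((U x)\<^sup>2 - (A x)\<^sup>2)" if x: "x \<in> S" for x
  proof -
    have "(A x - B x)\<^sup>2 \<le> 4/3 * (U x - B x)\<^sup>2 + 4 * (A x - U x)\<^sup>2"
    proof -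
      have "(A x - B x)\<^sup>2 = 4/3 * (U x - B x)\<^sup>2 + 4 * (A x - U x)\<^sup>2 - ((U x - B x) - 3 * (A x - U x))\<^sup>2 / 3"
        by (simp add: power2_eq_square field_simps)
      moreover have "0 \<le> ((U x - B x) - 3 * (A x - U x))\<^sup>2 / 3" by simp
      ultimately show ?thesis by linarith
    qed
    also have "(A x - U x)\<^sup>2 \<le> (U x)\<^sup>2 - (A x)\<^sup>2"
      using A[OF x] U[OF x] by (simp add: power2_eq_square algebra_simps mult_left_mono)
    finally show ?thesis by simp
  qed
  have "(\<Sum>x\<in>S. (A x - B x)\<^sup>2) \<le> (\<Sum>x\<in>S. 4/3 * (U x - B x)\<^sup>2 + 4 * ((U x)\<^sup>2 - (A x)\<^sup>2))"
    by (rule sum_mono) (rule pw)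
  also have "\<dots> = 4/3 * (\<Sum>x\<in>S. (U x - B x)\<^sup>2) + 4 * (\<Sum>x\<in>S. (U x)\<^sup>2 - (A x)\<^sup>2)"
    by (simp add: sum.distrib sum_distrib_left)
  finally have 1: "(\<Sum>x\<in>S. (A x - B x)\<^sup>2) \<le> 4/3 * (\<Sum>x\<in>S. (U x - B x)\<^sup>2) + 4 * (\<Sum>x\<in>S. (U x)\<^sup>2 - (A x)\<^sup>2)" .
  have 2: "(\<Sum>x\<in>S. (A x - B x)\<^sup>2) = 2 - 2 * (\<Sum>x\<in>S. A x * B x)"
  proof -
    have "(\<Sum>x\<in>S. (A x - B x)\<^sup>2) = (\<Sum>x\<in>S. (A x)\<^sup>2) + (\<Sum>x\<in>S. (B x)\<^sup>2) - 2 * (\<Sum>x\<in>S. A x * B x)"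
      by (simp add: power2_diff sum.distrib sum_subtractf sum_distrib_left algebra_simps)
    then show ?thesis using A1 B1 by simp
  qed
  have 3: "(\<Sum>x\<in>S. (U x - B x)\<^sup>2) = (\<Sum>x\<in>S. (U x)\<^sup>2 - (A x)\<^sup>2) + 2 - 2 * (\<Sum>x\<in>S. U x * B x)"
  proof -
    have "(\<Sum>x\<in>S. (U x - B x)\<^sup>2) = (\<Sum>x\<in>S. (U x)\<^sup>2 - (A x)\<^sup>2) + (\<Sum>x\<in>S. (A x)\<^sup>2) + (\<Sum>x\<in>S. (B x)\<^sup>2) - 2 * (\<Sum>x\<in>S. U x * B x)"
      by (simp add: power2_diff sum.distrib sum_subtractf sum_distrib_left algebra_simps)
    then show ?thesis using A1 B1 by simp
  qed
  define X where "X = (\<Sum>x\<in>S. A x * B x)"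
  define Y where "Y = (\<Sum>x\<in>S. U x * B x)"
  define E where "E = (\<Sum>x\<in>S. (U x)\<^sup>2 - (A x)\<^sup>2)"
  define Z where "Z = (\<Sum>x\<in>S. (U x - B x)\<^sup>2)"
  define W where "W = (\<Sum>x\<in>S. (A x - B x)\<^sup>2)"
  have "W \<le> 4/3 * Z + 4 * E" "W = 2 - 2 * X" "Z = E + 2 - 2 * Y" "E \<le> e"
    using 1 2 3 e unfolding X_def Y_def E_def Z_def W_def by auto
  then have "1 - X \<le> 4/3 * (1 - Y) + 8/3 * e" by argo
  then show ?thesis unfolding X_def Y_def .
qed

abbreviation SH :: "nat \<Rightarrow> ('o::finite,'a::finite) hist set" where
  "SH H \<equiv> {\<tau>. length \<tau> = H}"

lemma finite_SH: "finite (SH H :: ('o::finite,'a::finite) hist set)"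
  using finite_lists_length_eq[of "UNIV :: ('o \<times> 'a) set" H] by simp

lemma pol_prob_nonneg: "0 \<le> pol_prob \<pi> \<tau>"
  unfolding pol_prob_def by (rule prod_nonneg) simp

lemma pol_prob_le1: "pol_prob \<pi> \<tau> \<le> 1"
  unfolding pol_prob_def by (rule prod_le_1) (simp add: pmf_le_1)

lemma model_prob_nonneg: "0 \<le> model_prob \<theta> \<tau>"
  unfolding model_prob_def by (rule prod_nonneg) simp

lemma traj_sum1: "(\<Sum>x\<in>SH H. pmf (traj \<theta> \<pi> H) x) = (1::real)"
  by (rule sum_pmf_eq_1[OF finite_SH traj_set])

lemma traj_zero: "length x \<noteq> H \<Longrightarrow> pmf (traj \<theta> \<pi> H) x = 0"
  using traj_set[of \<theta> \<pi> H] by (auto simp: set_pmf_eq)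

lemma D_H2_fin: "D_H2 (traj \<theta> \<pi> H) (traj \<theta>' \<pi>' H) =
   1 - (\<Sum>x\<in>SH H. sqrt (pmf (traj \<theta> \<pi> H) x * pmf (traj \<theta>' \<pi>' H) x))"
proof -
  have "(\<Sum>\<^sub>\<infinity>x. sqrt (pmf (traj \<theta> \<pi> H) x * pmf (traj \<theta>' \<pi>' H) x)) =
        (\<Sum>\<^sub>\<infinity>x\<in>SH H. sqrt (pmf (traj \<theta> \<pi> H) x * pmf (traj \<theta>' \<pi>' H) x))"
    by (rule infsum_cong_neutral) (auto simp: traj_zero)
  also have "\<dots> = (\<Sum>x\<in>SH H. sqrt (pmf (traj \<theta> \<pi> H) x * pmf (traj \<theta>' \<pi>' H) x))"
    by (rule infsum_finite[OF finite_SH])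
  finally show ?thesis unfolding D_H2_def by simp
qed

lemma bracket_sum_lt:
  fixes l g :: "('o::finite,'a::finite) hist \<Rightarrow> real"
  assumes "is_bracket H \<eta> l g"
  shows "(\<Sum>\<tau>\<in>SH H. \<bar>l \<tau> - g \<tau>\<bar> * pol_prob \<pi> \<tau>) < \<eta>"
proof -
  have bdd: "bdd_above (range (\<lambda>\<pi>::('o,'a) policy. \<Sum>\<tau>\<in>SH H. \<bar>l \<tau> - g \<tau>\<bar> * pol_prob \<pi> \<tau>))"
  proof (rule bdd_aboveI2)
    fix \<pi> :: "('o,'a) policy"
    show "(\<Sum>\<tau>\<in>SH H. \<bar>l \<tau> - g \<tau>\<bar> * pol_prob \<pi> \<tau>) \<le> (\<Sum>\<tau>\<in>SH H. \<bar>l \<tau> - g \<tau>\<bar>)"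
      by (rule sum_mono) (simp add: mult_left_le pol_prob_le1 pol_prob_nonneg)
  qed
  have "(\<Sum>\<tau>\<in>SH H. \<bar>l \<tau> - g \<tau>\<bar> * pol_prob \<pi> \<tau>) \<le> (SUP \<pi>::('o,'a) policy. \<Sum>\<tau>\<in>SH H. \<bar>l \<tau> - g \<tau>\<bar> * pol_prob \<pi> \<tau>)"
    by (rule cSUP_upper[OF _ bdd]) simp
  also have "\<dots> < \<eta>" using assms unfolding is_bracket_def by simp
  finally show ?thesis .
qed

lemma bracket_hell:
  fixes \<theta> \<theta>s :: "('o::finite,'a::finite) model" and l g :: "('o,'a) hist \<Rightarrow> real"
  assumes br: "is_bracket H \<eta> l g"
    and cov: "\<forall>\<tau>. length \<tau> = H \<longrightarrow> l \<tau> \<le> model_prob \<theta> \<tau> \<and> model_prob \<theta> \<tau> \<le> g \<tau>"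
  shows "D_H2 (traj \<theta> \<nu> H) (traj \<theta>s \<nu> H) \<le>
     4/3 * (1 - (\<Sum>x\<in>SH H. sqrt (g x * pol_prob \<nu> x * pmf (traj \<theta>s \<nu> H) x))) + 8/3 * \<eta>"
proof -
  let ?P = "\<lambda>x. pmf (traj \<theta> \<nu> H) x" and ?S = "\<lambda>x. pmf (traj \<theta>s \<nu> H) x"
  have Pe: "?P x = model_prob \<theta> x * pol_prob \<nu> x" if "x \<in> SH H" for x
    using that by (simp add: traj_pmf)
  have gpos: "0 \<le> g x" if "x \<in> SH H" for x
    using cov model_prob_nonneg[of \<theta> x] that by force
  have le: "?P x \<le> g x * pol_prob \<nu> x" if "x \<in> SH H" for x
    using Pe[OF that] cov that by (simp add: mult_right_mono pol_prob_nonneg)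
  have "(\<Sum>x\<in>SH H. (sqrt (g x * pol_prob \<nu> x))\<^sup>2 - (sqrt (?P x))\<^sup>2) = (\<Sum>x\<in>SH H. (g x - model_prob \<theta> x) * pol_prob \<nu> x)"
    by (intro sum.cong refl) (auto simp: Pe gpos pol_prob_nonneg model_prob_nonneg algebra_simps)
  also have "\<dots> \<le> (\<Sum>x\<in>SH H. \<bar>l x - g x\<bar> * pol_prob \<nu> x)"
    by (intro sum_mono mult_right_mono) (use cov in \<open>auto simp: pol_prob_nonneg\<close>)
  also have "\<dots> \<le> \<eta>" using less_imp_le[OF bracket_sum_lt[OF br]] .
  finally have e: "(\<Sum>x\<in>SH H. (sqrt (g x * pol_prob \<nu> x))\<^sup>2 - (sqrt (?P x))\<^sup>2) \<le> \<eta>" .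
  have "1 - (\<Sum>x\<in>SH H. sqrt (?P x) * sqrt (?S x)) \<le>
     4/3 * (1 - (\<Sum>x\<in>SH H. sqrt (g x * pol_prob \<nu> x) * sqrt (?S x))) + 8/3 * \<eta>"
  proof (rule hell_core[OF finite_SH _ _ _ _ _ e])
    show "(\<Sum>x\<in>SH H. (sqrt (?P x))\<^sup>2) = 1" using traj_sum1[of \<theta> \<nu> H] by simp
    show "(\<Sum>x\<in>SH H. (sqrt (?S x))\<^sup>2) = 1" using traj_sum1[of \<theta>s \<nu> H] by simp
    fix x :: "('o,'a) hist" assume x: "x \<in> SH H"
    show "sqrt (?P x) \<le> sqrt (g x * pol_prob \<nu> x)" using le[OF x] by simp
  qed auto
  then show ?thesis unfolding D_H2_fin by (simp add: real_sqrt_mult)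
qed

lemma sum_pmf_le1: "finite A \<Longrightarrow> (\<Sum>x\<in>A. pmf p x) \<le> 1"
  using measure_measure_pmf_finite[of A p] measure_pmf.prob_le_1[of p A] by simp

lemma DR_fin_pos:
  assumes "D_R \<alpha> P Q \<le> ereal \<epsilon>" "x \<in> set_pmf P"
  shows "0 < pmf Q x"
  using assms pmf_nonneg[of Q x] unfolding D_R_def by (auto split: if_splits simp: order.order_iff_strict)

lemma DR_val:
  assumes "D_R \<alpha> P Q \<le> ereal \<epsilon>"
  shows "ln (\<Sum>x\<in>set_pmf P. pmf P x powr \<alpha> * pmf Q x powr (1 - \<alpha>)) / (\<alpha> - 1) \<le> \<epsilon>"
  using assms unfolding D_R_def by (auto split: if_splits)

lemma powr_ratio:
  fixes p q a :: real
  assumes "0 < p" "0 < q"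
  shows "p * (p / q) powr (a - 1) = p powr a * q powr (1 - a)"
proof -
  have "p * (p / q) powr (a - 1) = p powr 1 * (p powr (a - 1) / q powr (a - 1))"
    using assms by (simp add: powr_divide)
  also have "\<dots> = p powr a * q powr (1 - a)"
    using assms by (simp add: powr_add[symmetric] powr_minus_divide[symmetric] powr_diff)
  finally show ?thesis .
qed

lemma renyi_sum_le:
  assumes a: "\<alpha> > 1" and fin: "finite (set_pmf P)" and dr: "D_R \<alpha> P Q \<le> ereal \<epsilon>"
  shows "(\<Sum>x\<in>set_pmf P. pmf P x * (pmf P x / pmf Q x) powr (\<alpha> - 1)) \<le> exp ((\<alpha> - 1) * \<epsilon>)"
proof -
  let ?S = "(\<Sum>x\<in>set_pmf P. pmf P x powr \<alpha> * pmf Q x powr (1 - \<alpha>))"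
  have eq: "(\<Sum>x\<in>set_pmf P. pmf P x * (pmf P x / pmf Q x) powr (\<alpha> - 1)) = ?S"
    by (intro sum.cong refl powr_ratio) (auto simp: set_pmf_eq' DR_fin_pos[OF dr])
  obtain y where y: "y \<in> set_pmf P" using set_pmf_not_empty[of P] by blast
  have "0 < pmf P y powr \<alpha> * pmf Q y powr (1 - \<alpha>)"
    using y DR_fin_pos[OF dr y] by (simp add: set_pmf_eq')
  also have "\<dots> \<le> ?S"
    by (rule member_le_sum[OF y _ fin]) simp
  finally have Spos: "0 < ?S" .
  have "ln ?S \<le> (\<alpha> - 1) * \<epsilon>"
    using DR_val[OF dr] a by (simp add: divide_le_eq mult.commute)
  then have "?S \<le> exp ((\<alpha> - 1) * \<epsilon>)"
    using Spos by (metis exp_ln exp_le_cancel_iff)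
  then show ?thesis using eq by simp
qed

lemma renyi_int:
  assumes a: "\<alpha> > 1" and fin: "finite (set_pmf P)" and dr: "D_R \<alpha> P Q \<le> ereal \<epsilon>"
  shows "(\<integral>\<^sup>+x. ennreal ((pmf P x / pmf Q x) powr (\<alpha> - 1)) * ennreal (exp (- (\<alpha> - 1) * \<epsilon>)) \<partial>P) \<le> 1"
proof -
  have "(\<integral>\<^sup>+x. ennreal ((pmf P x / pmf Q x) powr (\<alpha> - 1)) * ennreal (exp (- (\<alpha> - 1) * \<epsilon>)) \<partial>P)
     = (\<Sum>x\<in>set_pmf P. ennreal ((pmf P x / pmf Q x) powr (\<alpha> - 1)) * ennreal (exp (- (\<alpha> - 1) * \<epsilon>)) * pmf P x)"
    by (rule nn_integral_measure_pmf_finite[OF fin]) simp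
  also have "\<dots> = (\<Sum>x\<in>set_pmf P. ennreal ((pmf P x / pmf Q x) powr (\<alpha> - 1) * exp (- (\<alpha> - 1) * \<epsilon>) * pmf P x))"
    by (intro sum.cong refl) (simp add: ennreal_mult)
  also have "\<dots> = ennreal (\<Sum>x\<in>set_pmf P. (pmf P x / pmf Q x) powr (\<alpha> - 1) * exp (- (\<alpha> - 1) * \<epsilon>) * pmf P x)"
    by (rule sum_ennreal) simp
  also have "(\<Sum>x\<in>set_pmf P. (pmf P x / pmf Q x) powr (\<alpha> - 1) * exp (- (\<alpha> - 1) * \<epsilon>) * pmf P x) =
      (\<Sum>x\<in>set_pmf P. pmf P x * (pmf P x / pmf Q x) powr (\<alpha> - 1)) * exp (- (\<alpha> - 1) * \<epsilon>)"
    unfolding sum_distrib_right by (intro sum.cong refl) (simp add: mult_ac)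
  also have "\<dots> \<le> ennreal (exp ((\<alpha> - 1) * \<epsilon>) * exp (- (\<alpha> - 1) * \<epsilon>))"
    by (intro ennreal_leI mult_right_mono renyi_sum_le[OF a fin dr]) simp
  also have "\<dots> = 1" by (simp add: exp_add[symmetric] algebra_simps)
  finally show ?thesis .
qed

lemma renyi_kl:
  assumes a: "\<alpha> > 1" and fin: "finite (set_pmf P)" and dr: "D_R \<alpha> P Q \<le> ereal \<gamma>"
    and x: "x \<in> set_pmf P"
  shows "pmf P x * ln (pmf P x / pmf Q x) - (pmf P x - pmf Q x) \<le> \<gamma>"
proof -
  let ?S = "set_pmf P"
  let ?p = "pmf P" and ?q = "pmf Q"
  have pp: "0 < ?p y" if "y \<in> ?S" for y using that by (simp add: set_pmf_eq')
  have qp: "0 < ?q y" if "y \<in> ?S" for y using DR_fin_pos[OF dr that] .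
  let ?Y = "\<lambda>y. (?p y / ?q y) powr (\<alpha> - 1)"
  define m where "m = (\<Sum>y\<in>?S. ?p y * ?Y y)"
  have Ypos: "0 < ?Y y" if "y \<in> ?S" for y using pp[OF that] qp[OF that] by simp
  obtain y0 where y0: "y0 \<in> ?S" using set_pmf_not_empty[of P] by blast
  have mpos: "0 < m" unfolding m_def
    by (rule sum_pos2[OF fin y0]) (use pp Ypos y0 in \<open>auto intro: mult_pos_pos less_imp_le\<close>)
  have p1: "(\<Sum>y\<in>?S. ?p y) = 1" by (rule sum_pmf_eq_1[OF fin]) simp
  have jensen: "(\<Sum>y\<in>?S. ?p y * ln (?Y y)) \<le> ln m"
  proof -
    have "(\<Sum>y\<in>?S. ?p y * ln (?Y y)) \<le> (\<Sum>y\<in>?S. ?p y * (ln m + ?Y y / m - 1))"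
    proof (rule sum_mono)
      fix y assume y: "y \<in> ?S"
      have "ln (?Y y / m) \<le> ?Y y / m - 1" by (rule ln_le_minus_one) (use Ypos[OF y] mpos in simp)
      then have "ln (?Y y) \<le> ln m + ?Y y / m - 1" using Ypos[OF y] mpos by (simp add: ln_div)
      then show "?p y * ln (?Y y) \<le> ?p y * (ln m + ?Y y / m - 1)"
        by (rule mult_left_mono) simp
    qed
    also have "\<dots> = ln m * (\<Sum>y\<in>?S. ?p y) + (\<Sum>y\<in>?S. ?p y * ?Y y) / m - (\<Sum>y\<in>?S. ?p y)"
      by (simp add: algebra_simps sum.distrib sum_subtractf sum_distrib_left sum_divide_distrib)
    also have "\<dots> = ln m" using p1 mpos unfolding m_def[symmetric] by simp
    finally show ?thesis .
  qed
  have "ln m \<le> (\<alpha> - 1) * \<gamma>"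
  proof -
    have "m \<le> exp ((\<alpha> - 1) * \<gamma>)" unfolding m_def by (rule renyi_sum_le[OF a fin dr])
    then show ?thesis using mpos by (metis ln_exp ln_le_cancel_iff exp_gt_zero order.strict_trans1)
  qed
  moreover have "(\<Sum>y\<in>?S. ?p y * ln (?Y y)) = (\<alpha> - 1) * (\<Sum>y\<in>?S. ?p y * ln (?p y / ?q y))"
    by (simp add: sum_distrib_left mult_ac)
  ultimately have "(\<alpha> - 1) * (\<Sum>y\<in>?S. ?p y * ln (?p y / ?q y)) \<le> (\<alpha> - 1) * \<gamma>"
    using jensen by linarith
  then have KL: "(\<Sum>y\<in>?S. ?p y * ln (?p y / ?q y)) \<le> \<gamma>" using a by simp
  have termb: "?p y - ?q y \<le> ?p y * ln (?p y / ?q y)" if y: "y \<in> ?S" for y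
  proof -
    have "ln (?q y / ?p y) \<le> ?q y / ?p y - 1" by (rule ln_le_minus_one) (use pp[OF y] qp[OF y] in simp)
    then have "- ln (?p y / ?q y) \<le> ?q y / ?p y - 1" using pp[OF y] qp[OF y] by (simp add: ln_div)
    then have "?p y * (- ln (?p y / ?q y)) \<le> ?p y * (?q y / ?p y - 1)"
      by (rule mult_left_mono) simp
    then show ?thesis using pp[OF y] by (simp add: algebra_simps)
  qed
  have "(\<Sum>y\<in>?S. ?p y * ln (?p y / ?q y)) = ?p x * ln (?p x / ?q x) + (\<Sum>y\<in>?S - {x}. ?p y * ln (?p y / ?q y))"
    using x fin by (simp add: sum.remove)
  moreover have "(\<Sum>y\<in>?S - {x}. ?p y - ?q y) \<le> (\<Sum>y\<in>?S - {x}. ?p y * ln (?p y / ?q y))"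
    by (rule sum_mono) (rule termb, simp)
  moreover have "(\<Sum>y\<in>?S - {x}. ?p y - ?q y) = (1 - ?p x) - (\<Sum>y\<in>?S - {x}. ?q y)"
    using p1 x fin by (simp add: sum_subtractf sum.remove)
  moreover have "(\<Sum>y\<in>?S - {x}. ?q y) + ?q x \<le> 1"
    using sum_pmf_le1[of ?S Q] x fin by (simp add: sum.remove)
  ultimately show ?thesis using KL by linarith
qed

lemma psi_bound:
  fixes p q c \<gamma> :: real
  assumes p: "0 < p" and q: "0 < q" and c: "0 < c" "c < 1"
    and h: "p * ln (p / q) - (p - q) \<le> \<gamma>" and g: "\<gamma> < p * (c - 1 - ln c)"
  shows "p * c \<le> q"
proof (rule ccontr)
  assume "\<not> p * c \<le> q"
  then have qc: "q < p * c" by simp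
  have "ln (p * c / q) \<ge> 1 - q / (p * c)"
  proof -
    have "ln (q / (p * c)) \<le> q / (p * c) - 1" by (rule ln_le_minus_one) (use p q c in simp)
    then show ?thesis using p q c by (simp add: ln_div)
  qed
  then have "p * ln (p * c / q) \<ge> p * (1 - q / (p * c))" by (rule mult_left_mono) (use p in simp)
  also have "p * (1 - q / (p * c)) = p - q / c" using p c by (simp add: field_simps)
  finally have A: "p * ln (p * c / q) \<ge> p - q / c" .
  have B: "ln (p / q) = ln (p * c / q) - ln c" using p q c by (simp add: ln_div ln_mult)
  have "p * ln (p / q) - (p - q) = p * ln (p * c / q) - p * ln c - p + q" by (simp add: B algebra_simps)
  also have "\<dots> \<ge> p - q / c - p * ln c - p + q" using A by simp
  finally have C: "p * ln (p / q) - (p - q) \<ge> q - q / c - p * ln c" by simp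
  have "q - q / c = - q * (1 - c) / c" using c by (simp add: field_simps)
  also have "\<dots> > - p * c * (1 - c) / c"
  proof -
    have "q / c < p" using qc c by (simp add: divide_less_eq mult.commute)
    then have "q / c * (1 - c) < p * (1 - c)" using c by (intro mult_strict_right_mono) auto
    moreover have "- q * (1 - c) / c = - (q / c * (1 - c))" by simp
    moreover have "- p * c * (1 - c) / c = - (p * (1 - c))" using c by simp
    ultimately show ?thesis by linarith
  qed
  also have "- p * c * (1 - c) / c = p * c - p" using c by (simp add: field_simps)
  finally have "q - q / c > p * c - p" .
  with C have "p * ln (p / q) - (p - q) > p * (c - 1 - ln c)" by (simp add: algebra_simps)
  with h g show False by linarith
qed


lemma jensen_ln:
  fixes p Y :: "'x \<Rightarrow> real"
  assumes fin: "finite S" and p: "\<And>y. y \<in> S \<Longrightarrow> 0 \<le> p y" and p1: "(\<Sum>y\<in>S. p y) = 1"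
    and Y: "\<And>y. y \<in> S \<Longrightarrow> 0 < Y y"
  shows "(\<Sum>y\<in>S. p y * ln (Y y)) \<le> ln (\<Sum>y\<in>S. p y * Y y)"
proof -
  define m where "m = (\<Sum>y\<in>S. p y * Y y)"
  have "S \<noteq> {}" using p1 by auto
  have mpos: "0 < m"
  proof -
    obtain y0 where y0: "y0 \<in> S" "0 < p y0"
    proof (rule ccontr)
      assume "\<not> thesis"
      then have "\<forall>y\<in>S. p y = 0" using p that by force
      then show False using p1 by simp
    qed
    show ?thesis unfolding m_def
    proof (rule sum_pos2[OF fin y0(1)])
      show "0 < p y0 * Y y0" using y0 Y by simp
      fix i assume "i \<in> S" then show "0 \<le> p i * Y i" using p Y by (simp add: less_imp_le)
    qed

  qed
  have "(\<Sum>y\<in>S. p y * ln (Y y)) \<le> (\<Sum>y\<in>S. p y * (ln m + Y y / m - 1))"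
  proof (rule sum_mono)
    fix y assume y: "y \<in> S"
    have "ln (Y y / m) \<le> Y y / m - 1" by (rule ln_le_minus_one) (use Y[OF y] mpos in simp)
    then have "ln (Y y) \<le> ln m + Y y / m - 1" using Y[OF y] mpos by (simp add: ln_div)
    then show "p y * ln (Y y) \<le> p y * (ln m + Y y / m - 1)"
      by (rule mult_left_mono) (use p[OF y] in simp)
  qed
  also have "\<dots> = ln m * (\<Sum>y\<in>S. p y) + (\<Sum>y\<in>S. p y * Y y) / m - (\<Sum>y\<in>S. p y)"
    by (simp add: algebra_simps sum.distrib sum_subtractf sum_distrib_left sum_divide_distrib)
  also have "\<dots> = ln m" using p1 mpos unfolding m_def[symmetric] by simp
  finally show ?thesis unfolding m_def .
qed

lemma DR_nonneg:
  assumes a: "\<alpha> > 1" and fin: "finite (set_pmf P)"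
  shows "0 \<le> D_R \<alpha> P Q"
proof (cases "\<exists>x\<in>set_pmf P. pmf Q x = 0")
  case True then show ?thesis unfolding D_R_def by simp
next
  case False
  let ?S = "set_pmf P" and ?p = "pmf P" and ?q = "pmf Q"
  have pp: "0 < ?p y" if "y \<in> ?S" for y using that by (simp add: set_pmf_eq')
  have qp: "0 < ?q y" if "y \<in> ?S" for y using False that pmf_nonneg[of Q y] by force
  let ?Y = "\<lambda>y. (?p y / ?q y) powr (\<alpha> - 1)"
  have p1: "(\<Sum>y\<in>?S. ?p y) = 1" by (rule sum_pmf_eq_1[OF fin]) simp
  have "(\<Sum>y\<in>?S. ?p y * ln (?Y y)) \<le> ln (\<Sum>y\<in>?S. ?p y * ?Y y)"
  proof (rule jensen_ln[OF fin _ p1])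
    fix y assume y: "y \<in> ?S"
    show "0 \<le> ?p y" by simp
    show "0 < ?Y y" using pp[OF y] qp[OF y] by simp
  qed
  also have "(\<Sum>y\<in>?S. ?p y * ?Y y) = (\<Sum>x\<in>?S. ?p x powr \<alpha> * ?q x powr (1 - \<alpha>))"
    by (rule sum.cong[OF refl], rule powr_ratio[OF pp qp]; assumption)
  finally have J: "(\<alpha> - 1) * (\<Sum>y\<in>?S. ?p y * ln (?p y / ?q y)) \<le> ln (\<Sum>x\<in>?S. ?p x powr \<alpha> * ?q x powr (1 - \<alpha>))"
    by (simp add: sum_distrib_left mult_ac)
  have termb: "?p y - ?q y \<le> ?p y * ln (?p y / ?q y)" if y: "y \<in> ?S" for y
  proof -
    have "ln (?q y / ?p y) \<le> ?q y / ?p y - 1" by (rule ln_le_minus_one) (use pp[OF y] qp[OF y] in simp)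
    then have "- ln (?p y / ?q y) \<le> ?q y / ?p y - 1" using pp[OF y] qp[OF y] by (simp add: ln_div)
    then have "?p y * (- ln (?p y / ?q y)) \<le> ?p y * (?q y / ?p y - 1)"
      by (rule mult_left_mono) simp
    then show ?thesis using pp[OF y] by (simp add: algebra_simps)
  qed
  have "0 \<le> (\<Sum>y\<in>?S. ?p y - ?q y)"
    using p1 sum_pmf_le1[OF fin, of Q] by (simp add: sum_subtractf)
  also have "\<dots> \<le> (\<Sum>y\<in>?S. ?p y * ln (?p y / ?q y))" by (rule sum_mono) (rule termb)
  finally have "0 \<le> (\<alpha> - 1) * (\<Sum>y\<in>?S. ?p y * ln (?p y / ?q y))" using a by simp
  with J have "0 \<le> ln (\<Sum>x\<in>?S. ?p x powr \<alpha> * ?q x powr (1 - \<alpha>)) / (\<alpha> - 1)" using a by simp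
  then show ?thesis using False unfolding D_R_def by simp
qed

lemma kappa_pos:
  fixes s :: real assumes "0 < s"
  shows "0 < exp (- s) - 1 - ln (exp (- s))"
proof (cases "s \<le> 2")
  case True
  have "(1 - s/2)\<^sup>2 \<le> (exp (- s / 2))\<^sup>2"
    using True by (intro power_mono) (auto simp: exp_ge_add_one_self[of "- s/2", simplified])
  also have "(exp (- s / 2))\<^sup>2 = exp (- s)" by (simp add: power2_eq_square exp_add[symmetric])
  finally have "1 - s + s\<^sup>2 / 4 \<le> exp (- s)" by (simp add: power2_eq_square algebra_simps)
  moreover have "0 < s\<^sup>2 / 4" using assms by simp
  moreover have "exp (- s) - 1 - ln (exp (- s)) = exp (- s) - 1 + s" by simp
  ultimately show ?thesis by linarith
next
  case False
  moreover have "exp (- s) - 1 - ln (exp (- s)) = exp (- s) - 1 + s" by simp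
  ultimately show ?thesis using exp_gt_zero[of "- s"] by linarith
qed

lemma sum_if_ninf:
  fixes r :: "'x \<Rightarrow> real"
  shows "finite A \<Longrightarrow> (\<Sum>a\<in>A. if P a then ereal (r a) else -\<infinity>) =
     (if \<forall>a\<in>A. P a then ereal (\<Sum>a\<in>A. r a) else -\<infinity>)"
proof (induction A rule: finite_induct)
  case empty then show ?case by simp
next
  case (insert x A)
  then show ?case by auto
qed

lemma eln_if: "eln x = (if 0 < x then ereal (ln x) else -\<infinity>)"
  by (simp add: eln_def)

lemma loglik_expand:
  assumes "j \<le> length D"
  shows "loglik H Q sel (take j D) \<theta> =
    (if \<forall>t<j. \<forall>h\<in>{1..H}. 0 < pmf (traj \<theta> (nu Q h (sel (take t D))) H) ((D!t) h)
     then ereal (\<Sum>t<j. \<Sum>h\<in>{1..H}. ln (pmf (traj \<theta> (nu Q h (sel (take t D))) H) ((D!t) h)))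
     else -\<infinity>)"
proof -
  let ?f = "\<lambda>t h. pmf (traj \<theta> (nu Q h (sel (take t D))) H) ((D!t) h)"
  have "loglik H Q sel (take j D) \<theta> = (\<Sum>t<j. \<Sum>h\<in>{1..H}. eln (?f t h))"
    unfolding loglik_def using assms by (intro sum.cong refl) (auto simp: min_def)
  also have "\<dots> = (\<Sum>t<j. if \<forall>h\<in>{1..H}. 0 < ?f t h then ereal (\<Sum>h\<in>{1..H}. ln (?f t h)) else -\<infinity>)"
    by (intro sum.cong refl) (simp add: eln_if sum_if_ninf)
  also have "\<dots> = (if \<forall>t\<in>{..<j}. \<forall>h\<in>{1..H}. 0 < ?f t h then ereal (\<Sum>t<j. \<Sum>h\<in>{1..H}. ln (?f t h)) else -\<infinity>)"
    by (rule sum_if_ninf) simp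
  finally show ?thesis by simp
qed

lemma Bset_sub: "Bset \<Theta>h \<beta> H Q sel D j \<subseteq> \<Theta>h"
  by (induction j) auto

lemma OMLE_B_sub: "OMLE_B \<Theta>h \<beta> H Q sel D \<subseteq> \<Theta>h"
  unfolding OMLE_B_def by (rule Bset_sub)

lemma OMLE_B_mem:
  assumes "\<theta> \<in> OMLE_B \<Theta>h \<beta> H Q sel (take (Suc j) D)" "Suc j \<le> length D"
  shows "loglik H Q sel (take (Suc j) D) \<theta> \<ge> (SUP \<theta>'\<in>\<Theta>h. loglik H Q sel (take (Suc j) D) \<theta>') - \<beta>"
proof -
  have l: "length (take (Suc j) D) = Suc j" using assms(2) by simp
  from assms(1) have "\<theta> \<in> Bset \<Theta>h \<beta> H Q sel (take (Suc j) D) (Suc j)"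
    unfolding OMLE_B_def l .
  then show ?thesis by simp
qed

lemma markov_pmf:
  fixes f :: "'x \<Rightarrow> ennreal" and p :: "'x pmf"
  assumes int: "(\<integral>\<^sup>+x. f x \<partial>p) \<le> 1" and c: "0 < c"
  shows "measure_pmf.prob p {x. ennreal c \<le> f x} \<le> 1 / c"
proof -
  let ?A = "{x. ennreal c \<le> f x}"
  have "ennreal c * emeasure p ?A = (\<integral>\<^sup>+x. ennreal c * indicator ?A x \<partial>p)"
    by (simp add: nn_integral_cmult_indicator)
  also have "\<dots> \<le> (\<integral>\<^sup>+x. f x \<partial>p)"
    by (intro nn_integral_mono) (auto split: split_indicator)
  also have "\<dots> \<le> 1" by fact
  finally have "ennreal (c * measure_pmf.prob p ?A) \<le> 1"
    using c by (simp add: measure_pmf.emeasure_eq_measure ennreal_mult)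
  then have "c * measure_pmf.prob p ?A \<le> 1"
    by (simp add: ennreal_le_1)
  then show ?thesis using c by (simp add: field_simps mult.commute)
qed

lemma event_prob:
  fixes G :: "('o,'a::finite) data list \<Rightarrow> ennreal"
  assumes int: "(\<integral>\<^sup>+D. G D \<partial>(data_pmf \<theta>s Q H sel j)) \<le> 1" and j: "j \<le> K" and c: "0 < c"
  shows "measure_pmf.prob (data_pmf \<theta>s Q H sel K) {D. ennreal c \<le> G (take j D)} \<le> 1 / c"
proof -
  have "measure_pmf.prob (data_pmf \<theta>s Q H sel K) {D. ennreal c \<le> G (take j D)} =
        measure_pmf.prob (map_pmf (take j) (data_pmf \<theta>s Q H sel K)) {D. ennreal c \<le> G D}"
    by (simp add: vimage_def)
  also have "\<dots> = measure_pmf.prob (data_pmf \<theta>s Q H sel j) {D. ennreal c \<le> G D}"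
    by (simp only: data_take[OF j])
  also have "\<dots> \<le> 1 / c" by (rule markov_pmf[OF int c])
  finally show ?thesis .
qed

lemma core:
  fixes \<theta> \<theta>s :: "('o::finite,'a::finite) model" and l g :: "('o,'a) hist \<Rightarrow> real"
    and D :: "('o,'a) data list"
  assumes br: "is_bracket H \<eta> l g"
    and cov: "\<forall>\<tau>. length \<tau> = H \<longrightarrow> l \<tau> \<le> model_prob \<theta> \<tau> \<and> model_prob \<theta> \<tau> \<le> g \<tau>"
    and jD: "j \<le> length D"
    and supp: "\<forall>t<j. \<forall>h\<in>{1..H}. (D!t) h \<in> set_pmf (traj \<theta>s (nu Q h (sel (take t D))) H)"
    and c1: "0 < c1"
    and G1: "(\<Prod>t<j. \<Prod>h\<in>{1..H}.
        ennreal (sqrt (max (g ((D!t) h)) 0 * pol_prob (nu Q h (sel (take t D))) ((D!t) h)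
                   / pmf (traj \<theta>s (nu Q h (sel (take t D))) H) ((D!t) h))) *
        inverse (ennreal (\<Sum>x\<in>SH H. sqrt (max (g x) 0 * pol_prob (nu Q h (sel (take t D))) x
                   * pmf (traj \<theta>s (nu Q h (sel (take t D))) H) x)))) < ennreal c1"
    and LL: "ereal ((\<Sum>t<j. \<Sum>h\<in>{1..H}. ln (pmf (traj \<theta>s (nu Q h (sel (take t D))) H) ((D!t) h))) - r)
              \<le> loglik H Q sel (take j D) \<theta>"
  shows "(\<Sum>t<j. \<Sum>h\<in>{1..H}. D_H2 (traj \<theta> (nu Q h (sel (take t D))) H) (traj \<theta>s (nu Q h (sel (take t D))) H))
     \<le> 4/3 * (ln c1 + r / 2) + 8/3 * \<eta> * real j * real H"
proof -
  define I where "I = {..<j} \<times> {1..H}"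
  have finI: "finite I" unfolding I_def by simp
  define nv where "nv = (\<lambda>(t,h). nu Q h (sel (take t D)))"
  define X where "X = (\<lambda>(t,h). (D!t) h)"
  define Ps where "Ps = (\<lambda>p. pmf (traj \<theta>s (nv p) H) (X p))"
  define Pt where "Pt = (\<lambda>p. pmf (traj \<theta> (nv p) H) (X p))"
  define rho where "rho = (\<lambda>p. \<Sum>x\<in>SH H. sqrt (max (g x) 0 * pol_prob (nv p) x * pmf (traj \<theta>s (nv p) H) x))"
  define a where "a = (\<lambda>p. sqrt (max (g (X p)) 0 * pol_prob (nv p) (X p) / Ps p))"
  have suppI: "X p \<in> set_pmf (traj \<theta>s (nv p) H)" if "p \<in> I" for p
    using supp that unfolding I_def X_def nv_def by auto
  have lenX: "length (X p) = H" if "p \<in> I" for p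
    using traj_set suppI[OF that] by blast
  have Pspos: "0 < Ps p" if "p \<in> I" for p
    using suppI[OF that] unfolding Ps_def by (simp add: set_pmf_eq')
  let ?Lstar = "\<Sum>p\<in>I. ln (Ps p)"
  have Lstar: "(\<Sum>t<j. \<Sum>h\<in>{1..H}. ln (pmf (traj \<theta>s (nu Q h (sel (take t D))) H) ((D!t) h))) = ?Lstar"
    unfolding I_def Ps_def nv_def X_def by (simp add: sum.cartesian_product split_def)
  have LLe: "loglik H Q sel (take j D) \<theta> =
    (if \<forall>t<j. \<forall>h\<in>{1..H}. 0 < pmf (traj \<theta> (nu Q h (sel (take t D))) H) ((D!t) h)
     then ereal (\<Sum>t<j. \<Sum>h\<in>{1..H}. ln (pmf (traj \<theta> (nu Q h (sel (take t D))) H) ((D!t) h)))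
     else -\<infinity>)" by (rule loglik_expand[OF jD])
  have allpos: "\<forall>t<j. \<forall>h\<in>{1..H}. 0 < pmf (traj \<theta> (nu Q h (sel (take t D))) H) ((D!t) h)"
  proof (rule ccontr)
    assume "\<not> ?thesis"
    then have "loglik H Q sel (take j D) \<theta> = -\<infinity>" using LLe by simp
    then show False using LL by simp
  qed
  have Ptpos: "0 < Pt p" if "p \<in> I" for p
    using allpos that unfolding Pt_def I_def nv_def X_def by auto
  have LLt: "?Lstar - r \<le> (\<Sum>p\<in>I. ln (Pt p))"
  proof -
    have "loglik H Q sel (take j D) \<theta> = ereal (\<Sum>p\<in>I. ln (Pt p))"
      using LLe allpos unfolding I_def Pt_def nv_def X_def by (simp add: sum.cartesian_product split_def)
    then show ?thesis using LL Lstar by simp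
  qed
  have gX: "0 \<le> g (X p)" "Pt p \<le> g (X p) * pol_prob (nv p) (X p)" if "p \<in> I" for p
  proof -
    have m: "l (X p) \<le> model_prob \<theta> (X p) \<and> model_prob \<theta> (X p) \<le> g (X p)" using cov lenX[OF that] by blast
    then show "0 \<le> g (X p)" using model_prob_nonneg[of \<theta> "X p"] by linarith
    have "Pt p = model_prob \<theta> (X p) * pol_prob (nv p) (X p)"
      unfolding Pt_def using lenX[OF that] by (simp add: traj_pmf)
    also have "\<dots> \<le> g (X p) * pol_prob (nv p) (X p)"
      using m by (intro mult_right_mono) (simp_all add: pol_prob_nonneg)
    finally show "Pt p \<le> g (X p) * pol_prob (nv p) (X p)" .
  qed
  have gpi_pos: "0 < g (X p) * pol_prob (nv p) (X p)" if "p \<in> I" for p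
    using gX[OF that] Ptpos[OF that] by linarith
  have apos: "0 < a p" if "p \<in> I" for p
    unfolding a_def using gpi_pos[OF that] gX[OF that] Pspos[OF that] by simp
  have rho_pos: "0 < rho p" if "p \<in> I" for p
  proof -
    have "0 < sqrt (max (g (X p)) 0 * pol_prob (nv p) (X p) * pmf (traj \<theta>s (nv p) H) (X p))"
      using gpi_pos[OF that] gX[OF that] Pspos[OF that] unfolding Ps_def by simp
    also have "\<dots> \<le> rho p" unfolding rho_def
      by (rule member_le_sum) (use lenX[OF that] finite_SH in \<open>auto simp: pol_prob_nonneg\<close>)
    finally show ?thesis .
  qed
  have "(\<Prod>p\<in>I. ennreal (a p) * inverse (ennreal (rho p))) < ennreal c1"
    using G1 unfolding I_def a_def rho_def nv_def X_def Ps_def by (simp add: prod.cartesian_product split_def)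
  also have "(\<Prod>p\<in>I. ennreal (a p) * inverse (ennreal (rho p))) = ennreal (\<Prod>p\<in>I. a p / rho p)"
  proof -
    have "(\<Prod>p\<in>I. ennreal (a p) * inverse (ennreal (rho p))) = (\<Prod>p\<in>I. ennreal (a p / rho p))"
      by (intro prod.cong refl)
         (use apos rho_pos in \<open>simp add: inverse_ennreal ennreal_mult[symmetric] divide_inverse less_imp_le\<close>)
    also have "\<dots> = ennreal (\<Prod>p\<in>I. a p / rho p)"
      by (rule prod_ennreal) (use apos rho_pos in \<open>simp add: less_imp_le\<close>)
    finally show ?thesis .
  qed
  finally have "(\<Prod>p\<in>I. a p / rho p) < c1"
    by (subst (asm) ennreal_less_iff) (use apos rho_pos in \<open>auto intro!: prod_nonneg simp: less_imp_le\<close>)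
  then have "ln (\<Prod>p\<in>I. a p / rho p) < ln c1"
    using apos rho_pos c1 by (subst ln_less_cancel_iff) (auto intro!: prod_pos)
  moreover have "ln (\<Prod>p\<in>I. a p / rho p) = (\<Sum>p\<in>I. ln (a p / rho p))"
    by (rule ln_prod[OF finI]) (use apos rho_pos in force)
  moreover have "(\<Sum>p\<in>I. ln (a p / rho p)) = (\<Sum>p\<in>I. ln (a p) - ln (rho p))"
    by (rule sum.cong[OF refl]) (use apos rho_pos in \<open>force simp: ln_div\<close>)
  ultimately have G: "(\<Sum>p\<in>I. ln (a p) - ln (rho p)) < ln c1" by simp
  have lna: "ln (a p) \<ge> (ln (Pt p) - ln (Ps p)) / 2" if "p \<in> I" for p
  proof -
    have "ln (a p) = ln (g (X p) * pol_prob (nv p) (X p) / Ps p) / 2"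
      unfolding a_def using gX[OF that] gpi_pos[OF that] Pspos[OF that] by (simp add: ln_sqrt)
    also have "ln (g (X p) * pol_prob (nv p) (X p) / Ps p) = ln (g (X p) * pol_prob (nv p) (X p)) - ln (Ps p)"
      using gpi_pos[OF that] Pspos[OF that] by (subst ln_div) auto
    also have "ln (g (X p) * pol_prob (nv p) (X p)) \<ge> ln (Pt p)"
      using gX[OF that] Ptpos[OF that] by simp
    ultimately show ?thesis by simp
  qed
  have S1: "(\<Sum>p\<in>I. - ln (rho p)) < ln c1 + r / 2"
  proof -
    have "(\<Sum>p\<in>I. (ln (Pt p) - ln (Ps p)) / 2) \<le> (\<Sum>p\<in>I. ln (a p))" by (rule sum_mono) (rule lna)
    moreover have "(\<Sum>p\<in>I. (ln (Pt p) - ln (Ps p)) / 2) = ((\<Sum>p\<in>I. ln (Pt p)) - ?Lstar) / 2"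
      by (simp add: sum_divide_distrib[symmetric] sum_subtractf)
    moreover have "(\<Sum>p\<in>I. ln (a p) - ln (rho p)) = (\<Sum>p\<in>I. ln (a p)) + (\<Sum>p\<in>I. - ln (rho p))"
      by (simp add: sum_subtractf sum_negf)
    ultimately show ?thesis using G LLt by argo
  qed
  have hp: "D_H2 (traj \<theta> (nv p) H) (traj \<theta>s (nv p) H) \<le> 4/3 * (- ln (rho p)) + 8/3 * \<eta>" if "p \<in> I" for p
  proof -
    have "D_H2 (traj \<theta> (nv p) H) (traj \<theta>s (nv p) H) \<le>
       4/3 * (1 - (\<Sum>x\<in>SH H. sqrt (g x * pol_prob (nv p) x * pmf (traj \<theta>s (nv p) H) x))) + 8/3 * \<eta>"
      by (rule bracket_hell[OF br cov])
    also have "(\<Sum>x\<in>SH H. sqrt (g x * pol_prob (nv p) x * pmf (traj \<theta>s (nv p) H) x)) = rho p"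
      unfolding rho_def
    proof (intro sum.cong refl)
      fix x :: "('o,'a) hist" assume "x \<in> SH H"
      then have "0 \<le> g x" using cov model_prob_nonneg[of \<theta> x] by force
      then show "sqrt (g x * pol_prob (nv p) x * pmf (traj \<theta>s (nv p) H) x) =
                 sqrt (max (g x) 0 * pol_prob (nv p) x * pmf (traj \<theta>s (nv p) H) x)" by simp
    qed
    also have "1 - rho p \<le> - ln (rho p)" using ln_le_minus_one[OF rho_pos[OF that]] by simp
    finally show ?thesis by simp
  qed
  have "(\<Sum>t<j. \<Sum>h\<in>{1..H}. D_H2 (traj \<theta> (nu Q h (sel (take t D))) H) (traj \<theta>s (nu Q h (sel (take t D))) H))
      = (\<Sum>p\<in>I. D_H2 (traj \<theta> (nv p) H) (traj \<theta>s (nv p) H))"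
    unfolding I_def nv_def by (simp add: sum.cartesian_product split_def)
  also have "\<dots> \<le> (\<Sum>p\<in>I. 4/3 * (- ln (rho p)) + 8/3 * \<eta>)" by (rule sum_mono) (rule hp)
  also have "\<dots> = 4/3 * (\<Sum>p\<in>I. - ln (rho p)) + 8/3 * \<eta> * real j * real H"
  proof -
    have "(\<Sum>p\<in>I. 4/3 * (- ln (rho p)) + 8/3 * \<eta>) = 4/3 * (\<Sum>p\<in>I. - ln (rho p)) + (\<Sum>p\<in>I. 8/3 * \<eta>)"
      by (simp only: sum.distrib sum_distrib_left)
    moreover have "(\<Sum>p\<in>I. 8/3 * \<eta>) = 8/3 * \<eta> * real j * real H"
      unfolding I_def by (simp add: card_cartesian_product)
    ultimately show ?thesis by simp
  qed
  also have "\<dots> \<le> 4/3 * (ln c1 + r / 2) + 8/3 * \<eta> * real j * real H"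
    using S1 by simp
  finally show ?thesis .
qed

lemma finite_traj_set: "finite (set_pmf (traj \<theta> \<pi> H :: ('o::finite,'a::finite) hist pmf))"
  by (rule finite_subset[OF traj_set finite_SH])

lemma sup_renyi:
  fixes \<theta>b \<theta>s :: "('o::finite,'a::finite) model" and D :: "('o,'a) data list"
  assumes tb: "\<theta>b \<in> \<Theta>h" and dr: "\<forall>\<pi>. D_R \<alpha> (traj \<theta>s \<pi> H) (traj \<theta>b \<pi> H) \<le> ereal \<epsilon>b"
    and a: "\<alpha> > 1" and jD: "j \<le> length D"
    and supp: "\<forall>t<j. \<forall>h\<in>{1..H}. (D!t) h \<in> set_pmf (traj \<theta>s (nu Q h (sel (take t D))) H)"
    and c2: "0 < c2"
    and G2: "(\<Prod>t<j. \<Prod>h\<in>{1..H}.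
        ennreal ((pmf (traj \<theta>s (nu Q h (sel (take t D))) H) ((D!t) h) /
                  pmf (traj \<theta>b (nu Q h (sel (take t D))) H) ((D!t) h)) powr (\<alpha> - 1)) *
        ennreal (exp (- (\<alpha> - 1) * \<epsilon>b))) < ennreal c2"
  shows "ereal ((\<Sum>t<j. \<Sum>h\<in>{1..H}. ln (pmf (traj \<theta>s (nu Q h (sel (take t D))) H) ((D!t) h)))
            - (\<epsilon>b * real j * real H + ln c2 / (\<alpha> - 1)))
         \<le> (SUP \<theta>'\<in>\<Theta>h. loglik H Q sel (take j D) \<theta>')"
proof -
  define I where "I = {..<j} \<times> {1..H}"
  have finI: "finite I" unfolding I_def by simp
  define nv where "nv = (\<lambda>(t,h). nu Q h (sel (take t D)))"
  define X where "X = (\<lambda>(t,h). (D!t) h)"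
  define Ps where "Ps = (\<lambda>p. pmf (traj \<theta>s (nv p) H) (X p))"
  define Qb where "Qb = (\<lambda>p. pmf (traj \<theta>b (nv p) H) (X p))"
  have suppI: "X p \<in> set_pmf (traj \<theta>s (nv p) H)" if "p \<in> I" for p
    using supp that unfolding I_def X_def nv_def by auto
  have Pspos: "0 < Ps p" if "p \<in> I" for p
    using suppI[OF that] unfolding Ps_def by (simp add: set_pmf_eq')
  have Qbpos: "0 < Qb p" if "p \<in> I" for p
    unfolding Qb_def by (rule DR_fin_pos[OF dr[rule_format] suppI[OF that]])
  have Lb: "loglik H Q sel (take j D) \<theta>b = ereal (\<Sum>p\<in>I. ln (Qb p))"
  proof -
    have "\<forall>t<j. \<forall>h\<in>{1..H}. 0 < pmf (traj \<theta>b (nu Q h (sel (take t D))) H) ((D!t) h)"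
      using Qbpos unfolding I_def Qb_def nv_def X_def by auto
    then show ?thesis
      unfolding loglik_expand[OF jD] I_def Qb_def nv_def X_def by (simp add: sum.cartesian_product split_def)
  qed
  have Lstar: "(\<Sum>t<j. \<Sum>h\<in>{1..H}. ln (pmf (traj \<theta>s (nu Q h (sel (take t D))) H) ((D!t) h))) = (\<Sum>p\<in>I. ln (Ps p))"
    unfolding I_def Ps_def nv_def X_def by (simp add: sum.cartesian_product split_def)
  let ?f = "\<lambda>p. (Ps p / Qb p) powr (\<alpha> - 1) * exp (- (\<alpha> - 1) * \<epsilon>b)"
  have fpos: "0 < ?f p" if "p \<in> I" for p using Pspos[OF that] Qbpos[OF that] by simp
  have "(\<Prod>p\<in>I. ennreal ((Ps p / Qb p) powr (\<alpha> - 1)) * ennreal (exp (- (\<alpha> - 1) * \<epsilon>b))) < ennreal c2"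
    using G2 unfolding I_def Ps_def Qb_def nv_def X_def by (simp add: prod.cartesian_product split_def)
  also have "(\<Prod>p\<in>I. ennreal ((Ps p / Qb p) powr (\<alpha> - 1)) * ennreal (exp (- (\<alpha> - 1) * \<epsilon>b))) = ennreal (\<Prod>p\<in>I. ?f p)"
    by (subst prod_ennreal[symmetric]) (auto intro!: prod.cong simp: ennreal_mult)
  finally have "(\<Prod>p\<in>I. ?f p) < c2"
    by (subst (asm) ennreal_less_iff) (auto intro!: prod_nonneg)
  then have "ln (\<Prod>p\<in>I. ?f p) < ln c2"
    using fpos c2 by (subst ln_less_cancel_iff) (auto intro!: prod_pos)
  moreover have "ln (\<Prod>p\<in>I. ?f p) = (\<Sum>p\<in>I. ln (?f p))"
    by (rule ln_prod[OF finI]) (use fpos in force)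
  moreover have "(\<Sum>p\<in>I. ln (?f p)) = (\<alpha> - 1) * ((\<Sum>p\<in>I. ln (Ps p)) - (\<Sum>p\<in>I. ln (Qb p))) - (\<alpha> - 1) * \<epsilon>b * card I"
  proof -
    have "(\<Sum>p\<in>I. ln (?f p)) = (\<Sum>p\<in>I. (\<alpha> - 1) * (ln (Ps p) - ln (Qb p)) - (\<alpha> - 1) * \<epsilon>b)"
    proof (rule sum.cong[OF refl])
      fix p assume p: "p \<in> I"
      have "ln (?f p) = ln ((Ps p / Qb p) powr (\<alpha> - 1)) + ln (exp (- (\<alpha> - 1) * \<epsilon>b))"
        using Pspos[OF p] Qbpos[OF p] by (subst ln_mult) auto
      also have "\<dots> = (\<alpha> - 1) * (ln (Ps p) - ln (Qb p)) - (\<alpha> - 1) * \<epsilon>b"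
        using Pspos[OF p] Qbpos[OF p] by (simp add: ln_div algebra_simps)
      finally show "ln (?f p) = (\<alpha> - 1) * (ln (Ps p) - ln (Qb p)) - (\<alpha> - 1) * \<epsilon>b" .
    qed
    also have "\<dots> = (\<alpha> - 1) * ((\<Sum>p\<in>I. ln (Ps p)) - (\<Sum>p\<in>I. ln (Qb p))) - (\<alpha> - 1) * \<epsilon>b * card I"
      by (simp add: sum_subtractf sum_distrib_left[symmetric])
    finally show ?thesis .
  qed
  moreover have "card I = j * H" unfolding I_def by (simp add: card_cartesian_product)
  ultimately have "(\<alpha> - 1) * ((\<Sum>p\<in>I. ln (Ps p)) - (\<Sum>p\<in>I. ln (Qb p))) < ln c2 + (\<alpha> - 1) * (\<epsilon>b * real j * real H)"
    by (simp add: algebra_simps)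
  then have "(\<Sum>p\<in>I. ln (Ps p)) - (\<Sum>p\<in>I. ln (Qb p)) < (ln c2 + (\<alpha> - 1) * (\<epsilon>b * real j * real H)) / (\<alpha> - 1)"
    using a by (simp add: less_divide_eq mult.commute)
  also have "\<dots> = \<epsilon>b * real j * real H + ln c2 / (\<alpha> - 1)"
    using a by (simp add: field_simps)
  finally have "(\<Sum>p\<in>I. ln (Ps p)) - (\<epsilon>b * real j * real H + ln c2 / (\<alpha> - 1)) \<le> (\<Sum>p\<in>I. ln (Qb p))"
    by simp
  then have "ereal ((\<Sum>p\<in>I. ln (Ps p)) - (\<epsilon>b * real j * real H + ln c2 / (\<alpha> - 1))) \<le> loglik H Q sel (take j D) \<theta>b"
    unfolding Lb by simp
  also have "\<dots> \<le> (SUP \<theta>'\<in>\<Theta>h. loglik H Q sel (take j D) \<theta>')" by (rule SUP_upper[OF tb])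
  finally show ?thesis unfolding Lstar .
qed


lemma sup_zero:
  fixes \<theta>s :: "('o::finite,'a::finite) model" and D :: "('o,'a) data list"
    and \<Theta>h :: "('o,'a) model set"
  assumes e0: "eps0 \<alpha> H \<theta>s \<Theta>h = 0"
    and a: "\<alpha> > 1" and jD: "j \<le> length D"
    and supp: "\<forall>t<j. \<forall>h\<in>{1..H}. (D!t) h \<in> set_pmf (traj \<theta>s (nu Q h (sel (take t D))) H)"
  shows "ereal (\<Sum>t<j. \<Sum>h\<in>{1..H}. ln (pmf (traj \<theta>s (nu Q h (sel (take t D))) H) ((D!t) h)))
         \<le> (SUP \<theta>'\<in>\<Theta>h. loglik H Q sel (take j D) \<theta>')"
proof -
  define I where "I = {..<j} \<times> {1..H}"
  have finI: "finite I" unfolding I_def by simp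
  define nv where "nv = (\<lambda>(t,h). nu Q h (sel (take t D)))"
  define X where "X = (\<lambda>(t,h). (D!t) h)"
  define Ps where "Ps = (\<lambda>p. pmf (traj \<theta>s (nv p) H) (X p))"
  have suppI: "X p \<in> set_pmf (traj \<theta>s (nv p) H)" if "p \<in> I" for p
    using supp that unfolding I_def X_def nv_def by auto
  have Pspos: "0 < Ps p" if "p \<in> I" for p
    using suppI[OF that] unfolding Ps_def by (simp add: set_pmf_eq')
  have Lstar: "(\<Sum>t<j. \<Sum>h\<in>{1..H}. ln (pmf (traj \<theta>s (nu Q h (sel (take t D))) H) ((D!t) h))) = (\<Sum>p\<in>I. ln (Ps p))"
    unfolding I_def Ps_def nv_def X_def by (simp add: sum.cartesian_product split_def)
  have "ereal (\<Sum>p\<in>I. ln (Ps p)) \<le> (SUP \<theta>'\<in>\<Theta>h. loglik H Q sel (take j D) \<theta>')"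
  proof (rule ereal_le_epsilon2)
    fix \<epsilon> :: real assume \<epsilon>: "0 < \<epsilon>"
    define n where "n = card I"
    define s where "s = \<epsilon> / (real n + 1)"
    have s: "0 < s" unfolding s_def using \<epsilon> by simp
    define c where "c = exp (- s)"
    have c: "0 < c" "c < 1" unfolding c_def using s by auto
    define \<kappa> where "\<kappa> = c - 1 - ln c"
    have \<kappa>: "0 < \<kappa>" unfolding \<kappa>_def c_def by (rule kappa_pos[OF s])
    define pm where "pm = Min (insert 1 (Ps ` I))"
    have pm_pos: "0 < pm" unfolding pm_def using finI Pspos by (subst Min_gr_iff) auto
    have pm_le: "pm \<le> Ps p" if "p \<in> I" for p unfolding pm_def using finI that by (intro Min_le) auto
    define \<gamma> where "\<gamma> = \<kappa> * pm / 2"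
    have \<gamma>: "0 < \<gamma>" unfolding \<gamma>_def using \<kappa> pm_pos by simp
    have "(INF \<theta>0\<in>\<Theta>h. SUP \<pi>::('o,'a) policy. D_R \<alpha> (traj \<theta>s \<pi> H) (traj \<theta>0 \<pi> H)) < ereal \<gamma>"
      using e0 \<gamma> unfolding eps0_def by simp
    then obtain \<theta>b where tb: "\<theta>b \<in> \<Theta>h" and lt: "(SUP \<pi>::('o,'a) policy. D_R \<alpha> (traj \<theta>s \<pi> H) (traj \<theta>b \<pi> H)) < ereal \<gamma>"
      by (auto simp: INF_less_iff)
    have dr: "D_R \<alpha> (traj \<theta>s \<pi> H) (traj \<theta>b \<pi> H) \<le> ereal \<gamma>" for \<pi>
      using SUP_lessD[OF lt, of \<pi>] by simp
    define Qb where "Qb = (\<lambda>p. pmf (traj \<theta>b (nv p) H) (X p))"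
    have Qb: "Ps p * c \<le> Qb p" if p: "p \<in> I" for p
    proof (rule psi_bound[OF Pspos[OF p] _ c])
      show "0 < Qb p" unfolding Qb_def by (rule DR_fin_pos[OF dr suppI[OF p]])
      show "Ps p * ln (Ps p / Qb p) - (Ps p - Qb p) \<le> \<gamma>"
        unfolding Ps_def Qb_def by (rule renyi_kl[OF a finite_traj_set dr suppI[OF p]])
      have "\<gamma> < \<kappa> * pm" unfolding \<gamma>_def using \<kappa> pm_pos by simp
      also have "\<dots> \<le> \<kappa> * Ps p" using pm_le[OF p] \<kappa> by simp
      finally show "\<gamma> < Ps p * (c - 1 - ln c)" unfolding \<kappa>_def by (simp add: mult.commute)
    qed
    have Qbpos: "0 < Qb p" if "p \<in> I" for p
      using Qb[OF that] Pspos[OF that] c by (meson mult_pos_pos order.strict_trans2)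
    have Lb: "loglik H Q sel (take j D) \<theta>b = ereal (\<Sum>p\<in>I. ln (Qb p))"
    proof -
      have "\<forall>t<j. \<forall>h\<in>{1..H}. 0 < pmf (traj \<theta>b (nu Q h (sel (take t D))) H) ((D!t) h)"
        using Qbpos unfolding I_def Qb_def nv_def X_def by auto
      then show ?thesis
        unfolding loglik_expand[OF jD] I_def Qb_def nv_def X_def by (simp add: sum.cartesian_product split_def)
    qed
    have "(\<Sum>p\<in>I. ln (Ps p) - s) \<le> (\<Sum>p\<in>I. ln (Qb p))"
    proof (rule sum_mono)
      fix p assume p: "p \<in> I"
      have "ln (Ps p) - s = ln (Ps p * c)" using Pspos[OF p] c unfolding c_def by (simp add: ln_mult)
      also have "\<dots> \<le> ln (Qb p)" using Qb[OF p] Pspos[OF p] c by (intro ln_mono) auto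
      finally show "ln (Ps p) - s \<le> ln (Qb p)" .
    qed
    moreover have "(\<Sum>p\<in>I. ln (Ps p) - s) = (\<Sum>p\<in>I. ln (Ps p)) - real n * s"
      unfolding n_def by (simp add: sum_subtractf)
    moreover have "real n * s \<le> \<epsilon>"
    proof -
      have "real n * s = \<epsilon> * (real n / (real n + 1))" unfolding s_def by simp
      also have "\<dots> \<le> \<epsilon> * 1" using \<epsilon> by (intro mult_left_mono) auto
      finally show ?thesis by simp
    qed
    ultimately have "(\<Sum>p\<in>I. ln (Ps p)) \<le> (\<Sum>p\<in>I. ln (Qb p)) + \<epsilon>" by linarith
    then have "ereal (\<Sum>p\<in>I. ln (Ps p)) \<le> loglik H Q sel (take j D) \<theta>b + ereal \<epsilon>"
      unfolding Lb by simp
    also have "\<dots> \<le> (SUP \<theta>'\<in>\<Theta>h. loglik H Q sel (take j D) \<theta>') + ereal \<epsilon>"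
      by (intro add_right_mono SUP_upper[OF tb])
    finally show "ereal (\<Sum>p\<in>I. ln (Ps p)) \<le> (SUP \<theta>'\<in>\<Theta>h. loglik H Q sel (take j D) \<theta>') + ereal \<epsilon>" .
  qed
  then show ?thesis unfolding Lstar .
qed

lemma sqrt_div_mult: "0 \<le> (y::real) \<Longrightarrow> sqrt (x / y) * y = sqrt (x * y)"
proof (cases "y = 0")
  case False
  assume y: "0 \<le> y"
  then have "sqrt (x / y) * y = sqrt x / sqrt y * (sqrt y * sqrt y)" by (simp add: real_sqrt_divide)
  also have "\<dots> = sqrt x * sqrt y" using False y by (simp add: field_simps)
  finally show ?thesis by (simp add: real_sqrt_mult)
qed simp

lemma bracket_int:
  fixes g :: "('o::finite,'a::finite) hist \<Rightarrow> real"
  shows "(\<integral>\<^sup>+x. ennreal (sqrt (max (g x) 0 * pol_prob \<nu> x / pmf (traj \<theta>s \<nu> H) x)) *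
           inverse (ennreal (\<Sum>x\<in>SH H. sqrt (max (g x) 0 * pol_prob \<nu> x * pmf (traj \<theta>s \<nu> H) x)))
         \<partial>(traj \<theta>s \<nu> H)) \<le> 1"
proof -
  define \<rho> where "\<rho> = (\<Sum>x\<in>SH H. sqrt (max (g x) 0 * pol_prob \<nu> x * pmf (traj \<theta>s \<nu> H) x))"
  have "(\<integral>\<^sup>+x. ennreal (sqrt (max (g x) 0 * pol_prob \<nu> x / pmf (traj \<theta>s \<nu> H) x)) * inverse (ennreal \<rho>) \<partial>(traj \<theta>s \<nu> H))
      = (\<Sum>x\<in>SH H. ennreal (sqrt (max (g x) 0 * pol_prob \<nu> x / pmf (traj \<theta>s \<nu> H) x)) * inverse (ennreal \<rho>) * pmf (traj \<theta>s \<nu> H) x)"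
    by (rule nn_integral_measure_pmf_support[OF finite_SH]) (use traj_set in auto)
  also have "\<dots> = inverse (ennreal \<rho>) * (\<Sum>x\<in>SH H. ennreal (sqrt (max (g x) 0 * pol_prob \<nu> x * pmf (traj \<theta>s \<nu> H) x)))"
    unfolding sum_distrib_left
  proof (intro sum.cong refl)
    fix x :: "('o,'a) hist"
    have "ennreal (sqrt (max (g x) 0 * pol_prob \<nu> x / pmf (traj \<theta>s \<nu> H) x)) * ennreal (pmf (traj \<theta>s \<nu> H) x)
       = ennreal (sqrt (max (g x) 0 * pol_prob \<nu> x / pmf (traj \<theta>s \<nu> H) x) * pmf (traj \<theta>s \<nu> H) x)"
      by (rule ennreal_mult''[symmetric]) simp
    also have "sqrt (max (g x) 0 * pol_prob \<nu> x / pmf (traj \<theta>s \<nu> H) x) * pmf (traj \<theta>s \<nu> H) x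
       = sqrt (max (g x) 0 * pol_prob \<nu> x * pmf (traj \<theta>s \<nu> H) x)" by (rule sqrt_div_mult) simp
    finally show "ennreal (sqrt (max (g x) 0 * pol_prob \<nu> x / pmf (traj \<theta>s \<nu> H) x)) * inverse (ennreal \<rho>) * ennreal (pmf (traj \<theta>s \<nu> H) x)
       = inverse (ennreal \<rho>) * ennreal (sqrt (max (g x) 0 * pol_prob \<nu> x * pmf (traj \<theta>s \<nu> H) x))"
      by (simp add: mult_ac)
  qed
  also have "(\<Sum>x\<in>SH H. ennreal (sqrt (max (g x) 0 * pol_prob \<nu> x * pmf (traj \<theta>s \<nu> H) x))) = ennreal \<rho>"
    unfolding \<rho>_def by (rule sum_ennreal) (simp add: pol_prob_nonneg)
  also have "inverse (ennreal \<rho>) * ennreal \<rho> \<le> 1"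
  proof (cases "\<rho> > 0")
    case True then show ?thesis by (simp add: inverse_ennreal ennreal_mult''[symmetric])
  next
    case False then have "ennreal \<rho> = 0" by (simp add: ennreal_eq_0_iff)
    then show ?thesis by simp
  qed
  finally show ?thesis unfolding \<rho>_def .
qed

lemma arith_final:
  fixes m n0 K j H :: nat and \<delta> \<eta> \<alpha> e :: real
  assumes m: "1 \<le> m" "m \<le> n0" and K: "1 \<le> K" and j: "j < K" and H: "1 \<le> H"
    and \<delta>: "0 < \<delta>" "\<delta> < 1" and \<eta>: "0 < \<eta>" "\<eta> \<le> 1 / (real K * real H)" and a: "\<alpha> > 1" and e: "0 \<le> e"
    and b: "b = ln (real n0) + ln (4 * exp 1 * real K / \<delta>) + e * (real K * real H) + (if e \<noteq> 0 then ln (4 * real K / \<delta>) / (\<alpha> - 1) else 0)"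
    and c1: "c1 = (if e = 0 then real m * real K / \<delta> else 4 * real m * real K / (3 * \<delta>))"
    and r0: "r0 = (if e = 0 then 0 else 2 * e * real j * real H + ln (4 * real K / \<delta>) / (\<alpha> - 1))"
  shows "4/3 * (ln c1 + (r0 + b) / 2) + 8/3 * \<eta> * real j * real H \<le> 2 * b"
proof -
  have ejH: "\<eta> * real j * real H \<le> 1"
  proof -
    have "\<eta> * real j * real H \<le> 1 / (real K * real H) * real j * real H"
      using \<eta> by (intro mult_right_mono) auto
    also have "\<dots> = real j / real K" using H K by (simp add: field_simps)
    also have "\<dots> \<le> 1" using j by simp
    finally show ?thesis .
  qed
  have ln3: "1 \<le> ln (3::real)" using exp_le by (subst ln_ge_iff) auto
  have ln4: "1 \<le> ln (4::real)" using ln3 by (smt (verit) ln_le_cancel_iff)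
  have lnm: "ln (real m) \<le> ln (real n0)" using m by simp
  define L where "L = ln (real K) - ln \<delta>"
  have lb: "ln (4 * exp 1 * real K / \<delta>) = ln 4 + 1 + L" unfolding L_def using K \<delta> by (simp add: ln_div ln_mult)
  define R where "R = ln (4 * real K / \<delta>) / (\<alpha> - 1)"
  have R: "0 \<le> R" unfolding R_def using a K \<delta> by (intro divide_nonneg_pos) (auto simp: field_simps)
  have eKH: "e * real j * real H \<le> e * (real K * real H)"
    using e j by (simp add: mult.assoc mult_left_mono mult_right_mono)
  show ?thesis
  proof (cases "e = 0")
    case True
    have lc: "ln c1 = ln (real m) + L" unfolding c1 L_def using True m K \<delta> by (simp add: ln_div ln_mult)
    have "r0 = 0" using True r0 by simp
    moreover have "b = ln (real n0) + ln 4 + 1 + L" using b True lb by simp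
    ultimately show ?thesis using lc lnm ln4 ejH by argo
  next
    case False
    have lc: "ln c1 = ln 4 + ln (real m) + L - ln 3" unfolding c1 L_def using False m K \<delta>
      by (simp add: ln_div ln_mult)
    have "r0 = 2 * (e * real j * real H) + R" using False r0 unfolding R_def by simp
    moreover have "b = ln (real n0) + ln 4 + 1 + L + e * (real K * real H) + R" using b False lb unfolding R_def by simp
    ultimately show ?thesis using lc lnm ln3 ejH eKH R by argo
  qed
qed

lemma prod_take_eq:
  "(\<Prod>t<j. \<Prod>h\<in>A. f (take t (take j D)) h ((take j D ! t) h)) = (\<Prod>t<j. \<Prod>h\<in>A. f (take t D) h ((D ! t) h))"
  by (intro prod.cong refl) (simp add: min_def)

theorem lemma5:
  fixes \<alpha> \<delta> \<eta> :: real and K H :: nat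
    and \<theta>s :: "('o::finite, 'a::finite) model" and \<Theta>h :: "('o,'a) model set"
    and Q :: "nat \<Rightarrow> 'a list set"
    and sel :: "('o,'a) data list \<Rightarrow> ('o,'a) policy"
  assumes "\<alpha> > 1" and "0 < \<delta>" and "\<delta> < 1" and "K \<ge> 1" and "H \<ge> 1"
    and "0 < \<eta>" and "\<eta> \<le> 1 / (real K * real H)"
    and "\<forall>h\<in>{1..H}. Q h \<noteq> {} \<and> (\<forall>q\<in>Q h. length q = H - h)"
    and "\<forall>D. length D < K \<longrightarrow> (\<forall>\<pi>.
           TV_diam H (OMLE_B \<Theta>h (beta0 \<alpha> \<delta> \<eta> K H \<theta>s \<Theta>h) H Q sel D) \<pi>
           \<le> TV_diam H (OMLE_B \<Theta>h (beta0 \<alpha> \<delta> \<eta> K H \<theta>s \<Theta>h) H Q sel D) (sel D))"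
  shows "measure_pmf.prob (data_pmf \<theta>s Q H sel K)
           {D. \<forall>k\<in>{1..K}. \<forall>\<theta>0\<in>OMLE_B \<Theta>h (beta0 \<alpha> \<delta> \<eta> K H \<theta>s \<Theta>h) H Q sel (take (k - 1) D).
                 ereal (\<Sum>t<k - 1. \<Sum>h\<in>{1..H}.
                    D_H2 (traj \<theta>0 (nu Q h (sel (take t D))) H) (traj \<theta>s (nu Q h (sel (take t D))) H))
                 \<le> 2 * beta0 \<alpha> \<delta> \<eta> K H \<theta>s \<Theta>h}
         \<ge> 1 - \<delta>"
proof -
  note a = assms(1) and \<delta>0 = assms(2) and \<delta>1 = assms(3) and K1 = assms(4) and H1 = assms(5)
    and \<eta>0 = assms(6) and \<eta>1 = assms(7)
  define \<beta> where "\<beta> = beta0 \<alpha> \<delta> \<eta> K H \<theta>s \<Theta>h"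
  define p where "p = data_pmf \<theta>s Q H sel K"
  define Good where "Good = {D. \<forall>k\<in>{1..K}. \<forall>\<theta>0\<in>OMLE_B \<Theta>h \<beta> H Q sel (take (k - 1) D).
                 ereal (\<Sum>t<k - 1. \<Sum>h\<in>{1..H}.
                    D_H2 (traj \<theta>0 (nu Q h (sel (take t D))) H) (traj \<theta>s (nu Q h (sel (take t D))) H))
                 \<le> 2 * \<beta>}"
  have bad: "measure_pmf.prob p (UNIV - Good) \<le> \<delta>"
  proof (cases "\<Theta>h = {} \<or> \<beta> = \<infinity>")
    case True
    have "Good = UNIV"
    proof -
      have "\<And>D'. OMLE_B \<Theta>h \<beta> H Q sel D' \<subseteq> \<Theta>h" by (rule OMLE_B_sub)
      then show ?thesis using True unfolding Good_def by auto
    qed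
    then show ?thesis using \<delta>0 by simp
  next
    case False
    then have Th: "\<Theta>h \<noteq> {}" and binf: "\<beta> \<noteq> \<infinity>" by auto
    have KH: "0 < real K * real H" using K1 H1 by simp
    have eps_nn: "0 \<le> eps0 \<alpha> H \<theta>s \<Theta>h"
      unfolding eps0_def
    proof (rule INF_greatest)
      fix \<theta>0 assume "\<theta>0 \<in> \<Theta>h"
      have "0 \<le> D_R \<alpha> (traj \<theta>s undefined H) (traj \<theta>0 undefined H)"
        by (rule DR_nonneg[OF a finite_traj_set])
      also have "\<dots> \<le> (SUP \<pi>::('o,'a) policy. D_R \<alpha> (traj \<theta>s \<pi> H) (traj \<theta>0 \<pi> H))"
        by (rule SUP_upper) simp
      finally show "0 \<le> (SUP \<pi>::('o,'a) policy. D_R \<alpha> (traj \<theta>s \<pi> H) (traj \<theta>0 \<pi> H))" .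
    qed
    obtain e where e: "eps0 \<alpha> H \<theta>s \<Theta>h = ereal e"
    proof (cases "eps0 \<alpha> H \<theta>s \<Theta>h")
      case (real r) then show ?thesis using that by simp
    next
      case PInf
      then have "\<beta> = \<infinity>" using KH unfolding \<beta>_def beta0_def ln_enat_def
        by (cases "bracket_num H \<eta> \<Theta>h") (use K1 H1 in auto)
      then show ?thesis using binf by simp
    next
      case MInf then show ?thesis using eps_nn by simp
    qed
    have e0: "0 \<le> e" using eps_nn e by simp
    obtain n0 where n0: "bracket_num H \<eta> \<Theta>h = enat n0"
    proof (cases "bracket_num H \<eta> \<Theta>h")
      case (enat n) then show ?thesis using that by simp
    next
      case infinity
      then have "\<beta> = \<infinity>" unfolding \<beta>_def beta0_def ln_enat_def using e by simp
      then show ?thesis using binf by simp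
    qed
    define b where "b = ln (real n0) + ln (4 * exp 1 * real K / \<delta>) + e * (real K * real H)
       + (if e \<noteq> 0 then ln (4 * real K / \<delta>) / (\<alpha> - 1) else 0)"
    have \<beta>b: "\<beta> = ereal b"
      unfolding \<beta>_def beta0_def ln_enat_def n0 e b_def by simp
    define BS where "BS = {n::nat. \<exists>(l::nat \<Rightarrow> ('o,'a) hist \<Rightarrow> real) (g::nat \<Rightarrow> ('o,'a) hist \<Rightarrow> real). (\<forall>i<n. is_bracket H \<eta> (l i) (g i)) \<and>
        (\<forall>\<theta>\<in>\<Theta>h. \<exists>i<n. \<forall>\<tau>. length \<tau> = H \<longrightarrow>
            l i \<tau> \<le> model_prob \<theta> \<tau> \<and> model_prob \<theta> \<tau> \<le> g i \<tau>)}"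
    have "(INF n\<in>BS. enat n) < enat (Suc n0)"
      using n0 unfolding bracket_num_def BS_def by simp
    then obtain m where mBS: "m \<in> BS" and mle: "enat m < enat (Suc n0)"
      by (auto simp: INF_less_iff)
    then have mn0: "m \<le> n0" by simp
    from mBS obtain l g where brk: "\<forall>i<m. is_bracket H \<eta> (l i) (g i)"
      and covr: "\<forall>\<theta>\<in>\<Theta>h. \<exists>i<m. \<forall>\<tau>. length \<tau> = H \<longrightarrow>
            l i \<tau> \<le> model_prob \<theta> \<tau> \<and> model_prob \<theta> \<tau> \<le> g i \<tau>"
      unfolding BS_def by blast
    have m1: "1 \<le> m" using covr Th by fastforce
    define c1 where "c1 = (if e = 0 then real m * real K / \<delta> else 4 * real m * real K / (3 * \<delta>))"
    define c2 where "c2 = 4 * real K / \<delta>"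
    have c1: "0 < c1" unfolding c1_def using m1 K1 \<delta>0 by auto
    have c2: "0 < c2" unfolding c2_def using K1 \<delta>0 by auto
    obtain \<theta>b where \<theta>b: "e \<noteq> 0 \<Longrightarrow> \<theta>b \<in> \<Theta>h \<and> (\<forall>\<pi>. D_R \<alpha> (traj \<theta>s \<pi> H) (traj \<theta>b \<pi> H) \<le> ereal (2 * e))"
    proof (cases "e = 0")
      case True then show ?thesis using that by simp
    next
      case False
      then have "(INF \<theta>0\<in>\<Theta>h. SUP \<pi>::('o,'a) policy. D_R \<alpha> (traj \<theta>s \<pi> H) (traj \<theta>0 \<pi> H)) < ereal (2 * e)"
        using e e0 unfolding eps0_def by simp
      then obtain \<theta>1 where "\<theta>1 \<in> \<Theta>h" and lt: "(SUP \<pi>::('o,'a) policy. D_R \<alpha> (traj \<theta>s \<pi> H) (traj \<theta>1 \<pi> H)) < ereal (2 * e)"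
        by (auto simp: INF_less_iff)
      moreover have "\<forall>\<pi>. D_R \<alpha> (traj \<theta>s \<pi> H) (traj \<theta>1 \<pi> H) \<le> ereal (2 * e)"
        using SUP_lessD[OF lt] by (simp add: less_imp_le)
      ultimately show ?thesis using that by blast
    qed
    define F1 where "F1 = (\<lambda>i (D'::('o,'a) data list) h (x::('o,'a) hist).
       ennreal (sqrt (max (g i x) 0 * pol_prob (nu Q h (sel D')) x / pmf (traj \<theta>s (nu Q h (sel D')) H) x)) *
       inverse (ennreal (\<Sum>y\<in>SH H. sqrt (max (g i y) 0 * pol_prob (nu Q h (sel D')) y * pmf (traj \<theta>s (nu Q h (sel D')) H) y))))"
    define M where "M = (\<lambda>i j (D'::('o,'a) data list). \<Prod>t<j. \<Prod>h\<in>{1..H}. F1 i (take t D') h ((D'!t) h))"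
    define E1 where "E1 = (\<lambda>i j. {D. ennreal c1 \<le> M i j (take j D)})"
    define F2 where "F2 = (\<lambda>(D'::('o,'a) data list) h (x::('o,'a) hist).
       ennreal ((pmf (traj \<theta>s (nu Q h (sel D')) H) x / pmf (traj \<theta>b (nu Q h (sel D')) H) x) powr (\<alpha> - 1)) *
       ennreal (exp (- (\<alpha> - 1) * (2 * e))))"
    define R where "R = (\<lambda>j (D'::('o,'a) data list). \<Prod>t<j. \<Prod>h\<in>{1..H}. F2 (take t D') h ((D'!t) h))"
    define E2 where "E2 = (\<lambda>j. {D. ennreal c2 \<le> R j (take j D)})"
    have pE1: "measure_pmf.prob p (E1 i j) \<le> 1 / c1" if "j \<le> K" for i j
      unfolding E1_def p_def
    proof (rule event_prob[OF _ that c1])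
      show "(\<integral>\<^sup>+D. M i j D \<partial>(data_pmf \<theta>s Q H sel j)) \<le> 1"
        unfolding M_def by (rule data_int) (unfold F1_def, rule bracket_int)
    qed
    have pE2: "measure_pmf.prob p (E2 j) \<le> 1 / c2" if "j \<le> K" "e \<noteq> 0" for j
      unfolding E2_def p_def
    proof (rule event_prob[OF _ that(1) c2])
      show "(\<integral>\<^sup>+D. R j D \<partial>(data_pmf \<theta>s Q H sel j)) \<le> 1"
        unfolding R_def
      proof (rule data_int)
        fix t D' h
        show "(\<integral>\<^sup>+x. F2 D' h x \<partial>(traj \<theta>s (nu Q h (sel D')) H)) \<le> 1"
          unfolding F2_def using \<theta>b[OF that(2)] by (intro renyi_int[OF a finite_traj_set]) auto
      qed
    qed
    define U1 where "U1 = (\<Union>ij\<in>{..<m} \<times> {..<K}. E1 (fst ij) (snd ij))"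
    define U2 where "U2 = (if e = 0 then {} else (\<Union>j\<in>{..<K}. E2 j))"
    have b0: "0 \<le> b"
    proof -
      have "0 \<le> ln (real n0)" using m1 mn0 by simp
      moreover have "0 \<le> ln (4 * exp 1 * real K / \<delta>)"
      proof -
        have e1: "1 \<le> exp (1::real)" by simp
        have k: "1 \<le> real K" using K1 by simp
        have "1 \<le> exp 1 * real K" using mult_mono[OF e1 k] by simp
        then have "\<delta> \<le> 4 * exp 1 * real K" using \<delta>1 by linarith
        then show ?thesis using \<delta>0 by (subst ln_ge_zero_iff) (auto simp: field_simps)
      qed
      moreover have "0 \<le> e * (real K * real H)" using e0 by simp
      moreover have "0 \<le> ln (4 * real K / \<delta>) / (\<alpha> - 1)"
        using a K1 \<delta>0 \<delta>1 by (intro divide_nonneg_pos) (auto simp: field_simps)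
      ultimately show ?thesis unfolding b_def by simp
    qed
    have contain: "(UNIV - Good) \<inter> set_pmf p \<subseteq> U1 \<union> U2"
    proof (rule subsetI, rule ccontr)
      fix D assume D: "D \<in> (UNIV - Good) \<inter> set_pmf p" and nU: "D \<notin> U1 \<union> U2"
      from D have Dsupp: "D \<in> set_pmf (data_pmf \<theta>s Q H sel K)" unfolding p_def by simp
      note ds = data_set[OF Dsupp]
      from D obtain k \<theta>0 where k: "k \<in> {1..K}" and th0: "\<theta>0 \<in> OMLE_B \<Theta>h \<beta> H Q sel (take (k - 1) D)"
        and viol: "\<not> ereal (\<Sum>t<k - 1. \<Sum>h\<in>{1..H}.
                    D_H2 (traj \<theta>0 (nu Q h (sel (take t D))) H) (traj \<theta>s (nu Q h (sel (take t D))) H)) \<le> 2 * \<beta>"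
        unfolding Good_def by blast
      define j where "j = k - 1"
      have jK: "j < K" using k unfolding j_def by auto
      have jD: "j \<le> length D" using ds jK by simp
      have supp: "\<forall>t<j. \<forall>h\<in>{1..H}. (D!t) h \<in> set_pmf (traj \<theta>s (nu Q h (sel (take t D))) H)"
        using ds jK by auto
      show False
      proof (cases j)
        case 0
        then show False using viol b0 unfolding j_def \<beta>b by simp
      next
        case (Suc j')
        have th0': "\<theta>0 \<in> OMLE_B \<Theta>h \<beta> H Q sel (take (Suc j') D)" using th0 Suc unfolding j_def by simp
        have LL1: "loglik H Q sel (take j D) \<theta>0 \<ge> (SUP \<theta>'\<in>\<Theta>h. loglik H Q sel (take j D) \<theta>') - ereal b"
          using OMLE_B_mem[OF th0'] jD Suc \<beta>b by simp
        have th0T: "\<theta>0 \<in> \<Theta>h" using th0 OMLE_B_sub by blast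
        then obtain i where im: "i < m" and covi: "\<forall>\<tau>. length \<tau> = H \<longrightarrow>
            l i \<tau> \<le> model_prob \<theta>0 \<tau> \<and> model_prob \<theta>0 \<tau> \<le> g i \<tau>" using covr by blast
        define r0 where "r0 = (if e = 0 then 0 else 2 * e * real j * real H + ln (4 * real K / \<delta>) / (\<alpha> - 1))"
        let ?Lstar = "\<Sum>t<j. \<Sum>h\<in>{1..H}. ln (pmf (traj \<theta>s (nu Q h (sel (take t D))) H) ((D!t) h))"
        have SUPge: "ereal (?Lstar - r0) \<le> (SUP \<theta>'\<in>\<Theta>h. loglik H Q sel (take j D) \<theta>')"
        proof (cases "e = 0")
          case True
          then have "eps0 \<alpha> H \<theta>s \<Theta>h = 0" using e by simp
          from sup_zero[OF this a jD supp] show ?thesis using True unfolding r0_def by simp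
        next
          case False
          have "D \<notin> E2 j" using nU False jK unfolding U2_def by auto
          then have "R j (take j D) < ennreal c2" unfolding E2_def by (simp add: not_le)
          then have G2: "(\<Prod>t<j. \<Prod>h\<in>{1..H}.
              ennreal ((pmf (traj \<theta>s (nu Q h (sel (take t D))) H) ((D!t) h) /
                  pmf (traj \<theta>b (nu Q h (sel (take t D))) H) ((D!t) h)) powr (\<alpha> - 1)) *
              ennreal (exp (- (\<alpha> - 1) * (2 * e)))) < ennreal c2"
          proof -
            have "R j (take j D) = (\<Prod>t<j. \<Prod>h\<in>{1..H}. F2 (take t D) h ((D!t) h))"
              unfolding R_def by (rule prod_take_eq)
            with \<open>R j (take j D) < ennreal c2\<close> show ?thesis unfolding F2_def by simp
          qed
          have "ereal (?Lstar - (2 * e * real j * real H + ln c2 / (\<alpha> - 1))) \<le> (SUP \<theta>'\<in>\<Theta>h. loglik H Q sel (take j D) \<theta>')"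
            using sup_renyi[OF _ _ a jD supp c2 G2] \<theta>b[OF False] by blast
          then show ?thesis using False unfolding r0_def c2_def by simp
        qed
        have LL: "ereal (?Lstar - (r0 + b)) \<le> loglik H Q sel (take j D) \<theta>0"
        proof -
          have "ereal (?Lstar - (r0 + b)) = ereal (?Lstar - r0) - ereal b" by simp
          also have "\<dots> \<le> (SUP \<theta>'\<in>\<Theta>h. loglik H Q sel (take j D) \<theta>') - ereal b"
            using SUPge by (rule ereal_minus_mono) simp
          also have "\<dots> \<le> loglik H Q sel (take j D) \<theta>0" by (rule LL1)
          finally show ?thesis .
        qed
        have "D \<notin> E1 i j" using nU im jK unfolding U1_def by auto
        then have "M i j (take j D) < ennreal c1" unfolding E1_def by (simp add: not_le)
        then have G1: "(\<Prod>t<j. \<Prod>h\<in>{1..H}.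
            ennreal (sqrt (max (g i ((D!t) h)) 0 * pol_prob (nu Q h (sel (take t D))) ((D!t) h)
                   / pmf (traj \<theta>s (nu Q h (sel (take t D))) H) ((D!t) h))) *
            inverse (ennreal (\<Sum>x\<in>SH H. sqrt (max (g i x) 0 * pol_prob (nu Q h (sel (take t D))) x
                   * pmf (traj \<theta>s (nu Q h (sel (take t D))) H) x)))) < ennreal c1"
        proof -
          have "M i j (take j D) = (\<Prod>t<j. \<Prod>h\<in>{1..H}. F1 i (take t D) h ((D!t) h))"
            unfolding M_def by (rule prod_take_eq)
          with \<open>M i j (take j D) < ennreal c1\<close> show ?thesis unfolding F1_def by simp
        qed
        have "(\<Sum>t<j. \<Sum>h\<in>{1..H}. D_H2 (traj \<theta>0 (nu Q h (sel (take t D))) H) (traj \<theta>s (nu Q h (sel (take t D))) H))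
           \<le> 4/3 * (ln c1 + (r0 + b) / 2) + 8/3 * \<eta> * real j * real H"
          by (rule core[OF brk[rule_format, OF im] covi jD supp c1 G1 LL])
        also have "\<dots> \<le> 2 * b"
          by (rule arith_final[OF m1 mn0 K1 jK H1 \<delta>0 \<delta>1 \<eta>0 \<eta>1 a e0 b_def c1_def r0_def])
        finally show False using viol unfolding j_def[symmetric] \<beta>b by simp
      qed
    qed
    have "measure_pmf.prob p (UNIV - Good) = measure_pmf.prob p ((UNIV - Good) \<inter> set_pmf p)"
      by (simp add: measure_Int_set_pmf)
    also have "\<dots> \<le> measure_pmf.prob p (U1 \<union> U2)"
      by (rule measure_pmf.finite_measure_mono[OF contain]) simp
    also have "\<dots> \<le> measure_pmf.prob p U1 + measure_pmf.prob p U2"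
      by (rule measure_Un_le) simp_all
    also have "measure_pmf.prob p U1 \<le> (\<Sum>ij\<in>{..<m} \<times> {..<K}. measure_pmf.prob p (E1 (fst ij) (snd ij)))"
      unfolding U1_def by (rule measure_pmf.finite_measure_subadditive_finite) simp_all
    also have "\<dots> \<le> (\<Sum>ij\<in>{..<m} \<times> {..<K}. 1 / c1)"
      by (rule sum_mono) (use pE1 in auto)
    also have "\<dots> = real m * real K / c1" by (simp add: card_cartesian_product)
    also have "measure_pmf.prob p U2 \<le> (if e = 0 then 0 else real K / c2)"
    proof (cases "e = 0")
      case True then show ?thesis unfolding U2_def by simp
    next
      case False
      have "measure_pmf.prob p U2 \<le> (\<Sum>j\<in>{..<K}. measure_pmf.prob p (E2 j))"
        unfolding U2_def using False by (simp add: measure_pmf.finite_measure_subadditive_finite)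
      also have "\<dots> \<le> (\<Sum>j\<in>{..<K}. 1 / c2)"
        by (rule sum_mono) (use pE2 False in auto)
      finally show ?thesis using False by simp
    qed
    also have "real m * real K / c1 + (if e = 0 then 0 else real K / c2) = \<delta>"
      unfolding c1_def c2_def using m1 K1 \<delta>0 by (auto simp: field_simps)
    finally show ?thesis by simp
  qed
  have "measure_pmf.prob p Good = 1 - measure_pmf.prob p (UNIV - Good)"
    using measure_pmf.finite_measure_compl[of Good p] measure_pmf.prob_space[of p] by simp
  then have "measure_pmf.prob p Good \<ge> 1 - \<delta>" using bad by simp
  then show ?thesis unfolding Good_def \<beta>_def p_def .
qed

end
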